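(* With $\Psi^s_{\mathbf{j}}\in\mathcal{M}_k(\mathbb{R}^n;V)$ as defined below, for every $\ell\in\{2,\dots,n\}$, $$\Gamma_{[\ell]}\Psi^s_{\mathbf{j}}=\lambda_\ell(\mathbf{j})\Psi^s_{\mathbf{j}},\qquad \lambda_\ell(\mathbf{j})=(-1)^{|\mathbf{j}_{\ell-1}|}\big(|\mathbf{j}_{\ell-1}|+\gamma_{[\ell]}-\tfrac12\big),$$ where $|\mathbf{j}_m|=j_1+\dots+j_m$ (so $|\mathbf{j}_{n-1}|=k$).
   Context: Fix $n\ge3$ and real parameters $\mu_1,\dots,\mu_n>0$; write $[\ell]=\{1,\dots,\ell\}$. For $i\in[n]$, $r_i$ is the reflection $(r_if)(x)=f(x_1,\dots,-x_i,\dots,x_n)$ and $T_i=\partial_{x_i}+\frac{\mu_i}{x_i}(1-r_i)$. $\mathcal{C}\ell_n$ is generated by $e_1,\dots,e_n$ with $e_ie_j+e_je_i=-2\delta_{ij}$, $V$ a fixed finite-dimensional left $\mathcal{C}\ell_n$-module with basis $\{v_s\}_{s\in I}$; operators act on $V$-valued polynomials with $x_i,T_i,r_i$ on the polynomial factor and $e_i$ by left multiplication. For $A\subseteq[n]$: $\underline{D}_A=\sum_{i\in A}e_iT_i$, $\underline{x}_A=\sum_{i\in A}e_ix_i$, $\gamma_A=\frac{|A|}2+\sum_{i\in A}\mu_i$, $\underline{S}_A=\frac12([\underline{x}_A,\underline{D}_A]-1)$, $\Gamma_A=\underline{S}_A\prod_{i\in A}r_i$. $\mathcal{M}_k(\mathbb{R}^n;V)=\ker\underline{D}_{[n]}\cap(\mathcal{P}_k(\mathbb{R}^n)\otimes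 V)$. For $2\le j\le n$, $\mathbf{CK}^{\mu_j}_{x_j}=\Gamma(\mu_j+\tfrac12)\big[\widetilde I_{\mu_j-1/2}(x_j\underline{D}_{[j-1]})+\tfrac12 e_jx_j\underline{D}_{[j-1]}\widetilde I_{\mu_j+1/2}(x_j\underline{D}_{[j-1]})\big]$ with $\widetilde I_\alpha(z)=\sum_{m\ge0}\frac{(z/2)^{2m}}{m!\Gamma(m+\alpha+1)}$, acting on polynomials in $x_1,\dots,x_{j-1}$. For non-negative integers $j_1,\dots,j_{n-2}$ with sum $\le k$, $j_{n-1}=k-\sum_{i\le n-2}j_i$, $\mathbf{j}=(j_1,\dots,j_{n-1})$, and $s\in I$: $\Psi^s_{\mathbf{j}}=\mathbf{CK}^{\mu_n}_{x_n}\big[\underline{x}_{[n-1]}^{j_{n-1}}\mathbf{CK}^{\mu_{n-1}}_{x_{n-1}}\big[\cdots\mathbf{CK}^{\mu_3}_{x_3}[\underline{x}_{[2]}^{j_2}\mathbf{CK}^{\mu_2}_{x_2}[x_1^{j_1}]]\cdots\big]\big]v_s$. *)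

theory Defs
  imports "HOL-Analysis.Analysis" "HOL-Library.Poly_Mapping"
begin

(* A V-valued polynomial in the variables x_1, x_2, ... is represented by its
   coefficient function: exponent vector alpha (finitely supported, variable
   index |-> exponent) |-> coefficient in V. *)
type_synonym 'v vpoly = "(nat \<Rightarrow>\<^sub>0 nat) \<Rightarrow> 'v"

definition mulx :: "nat \<Rightarrow> 'v::real_vector vpoly \<Rightarrow> 'v vpoly" where
  "mulx i p = (\<lambda>\<alpha>. if Poly_Mapping.lookup \<alpha> i = 0 then 0 else p (\<alpha> - Poly_Mapping.single i 1))"

definition dx :: "nat \<Rightarrow> 'v::real_vector vpoly \<Rightarrow> 'v vpoly" where
  "dx i p = (\<lambda>\<alpha>. real (Poly_Mapping.lookup \<alpha> i + 1) *\<^sub>R p (\<alpha> + Poly_Mapping.single i 1))"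

definition refl :: "nat \<Rightarrow> 'v::real_vector vpoly \<Rightarrow> 'v vpoly" where
  "refl i p = (\<lambda>\<alpha>. ((-1::real) ^ Poly_Mapping.lookup \<alpha> i) *\<^sub>R p \<alpha>)"

(* division by x_i (exact on polynomials divisible by x_i) *)
definition divx :: "nat \<Rightarrow> 'v::real_vector vpoly \<Rightarrow> 'v vpoly" where
  "divx i p = (\<lambda>\<alpha>. p (\<alpha> + Poly_Mapping.single i 1))"

definition dunkl :: "(nat \<Rightarrow> real) \<Rightarrow> nat \<Rightarrow> 'v::real_vector vpoly \<Rightarrow> 'v vpoly" where
  "dunkl mu i p = (\<lambda>\<alpha>. dx i p \<alpha> + mu i *\<^sub>R divx i (\<lambda>\<beta>. p \<beta> - refl i p \<beta>) \<alpha>)"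

definition DiracA :: "(nat \<Rightarrow> 'v \<Rightarrow> 'v) \<Rightarrow> (nat \<Rightarrow> real) \<Rightarrow> nat set \<Rightarrow> 'v::real_vector vpoly \<Rightarrow> 'v vpoly" where
  "DiracA e mu A p = (\<lambda>\<alpha>. \<Sum>i\<in>A. e i (dunkl mu i p \<alpha>))"

definition xvecA :: "(nat \<Rightarrow> 'v \<Rightarrow> 'v) \<Rightarrow> nat set \<Rightarrow> 'v::real_vector vpoly \<Rightarrow> 'v vpoly" where
  "xvecA e A p = (\<lambda>\<alpha>. \<Sum>i\<in>A. e i (mulx i p \<alpha>))"

definition gammaA :: "(nat \<Rightarrow> real) \<Rightarrow> nat set \<Rightarrow> real" where
  "gammaA mu A = real (card A) / 2 + (\<Sum>i\<in>A. mu i)"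

definition SA :: "(nat \<Rightarrow> 'v \<Rightarrow> 'v) \<Rightarrow> (nat \<Rightarrow> real) \<Rightarrow> nat set \<Rightarrow> 'v::real_vector vpoly \<Rightarrow> 'v vpoly" where
  "SA e mu A p = (\<lambda>\<alpha>. (1/2::real) *\<^sub>R
      (xvecA e A (DiracA e mu A p) \<alpha> - DiracA e mu A (xvecA e A p) \<alpha> - p \<alpha>))"

definition reflA :: "nat set \<Rightarrow> 'v::real_vector vpoly \<Rightarrow> 'v vpoly" where
  "reflA A p = (\<lambda>\<alpha>. ((\<Prod>i\<in>A. (-1::real) ^ Poly_Mapping.lookup \<alpha> i)) *\<^sub>R p \<alpha>)"

definition GammaOp :: "(nat \<Rightarrow> 'v \<Rightarrow> 'v) \<Rightarrow> (nat \<Rightarrow> real) \<Rightarrow> nat set \<Rightarrow> 'v::real_vector vpoly \<Rightarrow> 'v vpoly" where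
  "GammaOp e mu A p = SA e mu A (reflA A p)"

(* tilde I_a(z) = sum_m (z/2)^(2m) / (m! Gamma(m+a+1)), applied to an operator z,
   evaluated coefficientwise *)
definition Itil :: "real \<Rightarrow> ('v::real_normed_vector vpoly \<Rightarrow> 'v vpoly) \<Rightarrow> 'v vpoly \<Rightarrow> 'v vpoly" where
  "Itil a z f = (\<lambda>\<alpha>. suminf (\<lambda>m. (1 / (4 ^ m * fact m * Gamma (real m + a + 1))) *\<^sub>R (z ^^ (2*m)) f \<alpha>))"

definition CK :: "(nat \<Rightarrow> 'v \<Rightarrow> 'v) \<Rightarrow> (nat \<Rightarrow> real) \<Rightarrow> nat \<Rightarrow> 'v::real_normed_vector vpoly \<Rightarrow> 'v vpoly" where
  "CK e mu j f =
     (let z = (\<lambda>p. mulx j (DiracA e mu {1..<j} p)) in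
      (\<lambda>\<alpha>. Gamma (mu j + 1/2) *\<^sub>R
         (Itil (mu j - 1/2) z f \<alpha> + (1/2::real) *\<^sub>R e j (z (Itil (mu j + 1/2) z f) \<alpha>))))"

(* CKbuild ... m = B_{m+1}, where B_1 = x_1^{j_1} v, B_2 = CK_2[B_1],
   B_j = CK_j[x_[j-1]^{j_{j-1}} B_{j-1}] for j >= 3 *)
primrec CKbuild :: "(nat \<Rightarrow> 'v \<Rightarrow> 'v) \<Rightarrow> (nat \<Rightarrow> real) \<Rightarrow> (nat \<Rightarrow> nat) \<Rightarrow> 'v::real_normed_vector \<Rightarrow> nat \<Rightarrow> 'v vpoly" where
  "CKbuild e mu js v 0 = (\<lambda>\<alpha>. if \<alpha> = Poly_Mapping.single 1 (js 1) then v else 0)"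
| "CKbuild e mu js v (Suc m) =
     CK e mu (m + 2) ((if m = 0 then id else (xvecA e {1..m+1} ^^ js (m+1))) (CKbuild e mu js v m))"

definition Psi :: "(nat \<Rightarrow> 'v \<Rightarrow> 'v) \<Rightarrow> (nat \<Rightarrow> real) \<Rightarrow> nat \<Rightarrow> (nat \<Rightarrow> nat) \<Rightarrow> 'v::real_normed_vector \<Rightarrow> 'v vpoly" where
  "Psi e mu n js v = CKbuild e mu js v (n - 1)"

end

theory Submission
  imports Defs
begin
abbreviation dlt :: "nat \<Rightarrow> nat \<Rightarrow>\<^sub>0 nat" where "dlt i \<equiv> Poly_Mapping.single i (Suc 0)"

lemma lk_add_d: "Poly_Mapping.lookup (\<alpha> + dlt i) k = Poly_Mapping.lookup \<alpha> k + (if k = i then 1 else 0)"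
  by (simp add: lookup_add lookup_single)

lemma lk_minus_d: "Poly_Mapping.lookup (\<alpha> - dlt i) k = Poly_Mapping.lookup \<alpha> k - (if k = i then 1 else 0)"
  by (auto simp: lookup_minus lookup_single when_def)

lemma pm_add_minus: "\<alpha> + dlt i - dlt i = \<alpha>"
  by (rule poly_mapping_eqI) (auto simp: lookup_add lookup_minus lookup_single when_def)

lemma pm_minus_add: "Poly_Mapping.lookup \<alpha> i \<noteq> 0 \<Longrightarrow> \<alpha> - dlt i + dlt i = \<alpha>"
  by (rule poly_mapping_eqI) (auto simp: lookup_add lookup_minus lookup_single when_def)

lemma pm_swap: "i \<noteq> j \<Longrightarrow> Poly_Mapping.lookup \<alpha> j \<noteq> 0 \<Longrightarrow> \<alpha> - dlt j + dlt i = \<alpha> + dlt i - dlt j"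
  by (rule poly_mapping_eqI) (auto simp: lookup_add lookup_minus lookup_single when_def)

lemmas pm_add_minus' = pm_add_minus[unfolded One_nat_def]
lemmas pm_minus_add' = pm_minus_add[unfolded One_nat_def]
lemmas pm_swap' = pm_swap[unfolded One_nat_def]

definition cc :: "(nat \<Rightarrow> real) \<Rightarrow> nat \<Rightarrow> nat \<Rightarrow> real" where
  "cc mu i a = real a + 1 + mu i * (1 + (-1) ^ a)"

lemma dunkl_eq: "dunkl mu i p \<alpha> = cc mu i (Poly_Mapping.lookup \<alpha> i) *\<^sub>R p (\<alpha> + dlt i)"
proof -
  have l: "Poly_Mapping.lookup (\<alpha> + dlt i) i = Poly_Mapping.lookup \<alpha> i + 1"
    by (simp add: lookup_add)
  have r: "refl i p (\<alpha> + dlt i) = (- ((-1) ^ Poly_Mapping.lookup \<alpha> i)) *\<^sub>R p (\<alpha> + dlt i)"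
    unfolding refl_def l by simp
  show ?thesis
    by (simp add: dunkl_def dx_def divx_def cc_def r lookup_add algebra_simps)
qed

lemma mulx_eq: "mulx i p \<alpha> = (if Poly_Mapping.lookup \<alpha> i = 0 then 0 else p (\<alpha> - dlt i))"
  by (simp add: mulx_def)

definition Eop :: "(nat \<Rightarrow> 'v \<Rightarrow> 'v) \<Rightarrow> nat \<Rightarrow> 'v::real_vector vpoly \<Rightarrow> 'v vpoly" where
  "Eop e i p = (\<lambda>\<alpha>. e i (p \<alpha>))"

definition Eul :: "nat set \<Rightarrow> 'v::real_vector vpoly \<Rightarrow> 'v vpoly" where
  "Eul A p = (\<lambda>\<alpha>. real (\<Sum>i\<in>A. Poly_Mapping.lookup \<alpha> i) *\<^sub>R p \<alpha>)"

locale CL =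
  fixes e :: "nat \<Rightarrow> 'v::real_normed_vector \<Rightarrow> 'v" and mu :: "nat \<Rightarrow> real" and n :: nat
  assumes lin: "\<And>i. i \<in> {1..n} \<Longrightarrow> linear (e i)"
    and cl: "\<And>i j w. i \<in> {1..n} \<Longrightarrow> j \<in> {1..n} \<Longrightarrow> e i (e j w) + e j (e i w) = (if i = j then (-2) *\<^sub>R w else 0)"
begin

lemma e_add: "i \<in> {1..n} \<Longrightarrow> e i (x + y) = e i x + e i y"
  using lin linear_iff by blast
lemma e_scale: "i \<in> {1..n} \<Longrightarrow> e i (c *\<^sub>R x) = c *\<^sub>R e i x"
  using lin linear_iff by blast
lemma e_0: "i \<in> {1..n} \<Longrightarrow> e i 0 = 0"
  using e_scale[of i 0 0] by simp
lemma e_neg: "i \<in> {1..n} \<Longrightarrow> e i (- x) = - e i x"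
  using e_scale[of i "-1" x] by simp
lemma e_diff: "i \<in> {1..n} \<Longrightarrow> e i (x - y) = e i x - e i y"
  using e_add[of i x "-y"] e_neg[of i y] by simp
lemma e_sum: "i \<in> {1..n} \<Longrightarrow> e i (\<Sum>k\<in>S. f k) = (\<Sum>k\<in>S. e i (f k))"
  by (induction S rule: infinite_finite_induct) (auto simp: e_0 e_add)
lemma e_sq: "i \<in> {1..n} \<Longrightarrow> e i (e i w) = - w"
proof -
  assume i: "i \<in> {1..n}"
  have "(2::real) *\<^sub>R e i (e i w) = (2::real) *\<^sub>R (- w)"
    using cl[OF i i, of w] by (simp add: scaleR_2)
  then show ?thesis by (metis scaleR_cancel_left zero_neq_numeral)
qed
lemma e_anti: "i \<in> {1..n} \<Longrightarrow> j \<in> {1..n} \<Longrightarrow> i \<noteq> j \<Longrightarrow> e i (e j w) = - e j (e i w)"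
  using cl[of i j w] by (simp add: eq_neg_iff_add_eq_0)
lemma e_if0: "i \<in> {1..n} \<Longrightarrow> e i (if P then 0 else x) = (if P then 0 else e i x)"
  by (simp add: e_0)

lemma xvec_eq: "xvecA e A p \<alpha> = (\<Sum>i\<in>A. e i (if Poly_Mapping.lookup \<alpha> i = 0 then 0 else p (\<alpha> - dlt i)))"
  by (simp add: xvecA_def mulx_eq)
lemma dirac_eq: "DiracA e mu A p \<alpha> = (\<Sum>i\<in>A. e i (cc mu i (Poly_Mapping.lookup \<alpha> i) *\<^sub>R p (\<alpha> + dlt i)))"
  by (simp add: DiracA_def dunkl_eq)

lemma cc_sum: "Poly_Mapping.lookup \<alpha> i \<noteq> 0 \<Longrightarrow> cc mu i (Poly_Mapping.lookup \<alpha> i - 1) + cc mu i (Poly_Mapping.lookup \<alpha> i) = 2 * real (Poly_Mapping.lookup \<alpha> i) + 1 + 2 * mu i"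
proof -
  assume "Poly_Mapping.lookup \<alpha> i \<noteq> 0"
  then obtain m where m: "Poly_Mapping.lookup \<alpha> i = Suc m" using not0_implies_Suc by blast
  show ?thesis unfolding m cc_def by (simp add: algebra_simps)
qed

lemma anticomm:
  assumes A: "A \<subseteq> {1..n}"
  shows "xvecA e A (DiracA e mu A p) \<alpha> + DiracA e mu A (xvecA e A p) \<alpha> =
     - (2 * real (\<Sum>i\<in>A. Poly_Mapping.lookup \<alpha> i) + real (card A) + 2 * (\<Sum>i\<in>A. mu i)) *\<^sub>R p \<alpha>"
proof -
  define U where "U i j = (if Poly_Mapping.lookup \<alpha> j = 0 then 0 else cc mu i (Poly_Mapping.lookup (\<alpha> - dlt j) i) *\<^sub>R p (\<alpha> - dlt j + dlt i))" for i j
  define W where "W i j = cc mu i (Poly_Mapping.lookup \<alpha> i) *\<^sub>R (if Poly_Mapping.lookup (\<alpha> + dlt i) j = 0 then 0 else p (\<alpha> + dlt i - dlt j))" for i j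
  have fin: "finite A" using A finite_subset by blast
  have xD: "xvecA e A (DiracA e mu A p) \<alpha> = (\<Sum>j\<in>A. \<Sum>i\<in>A. e j (e i (U i j)))"
    unfolding xvec_eq dirac_eq U_def
    apply (rule sum.cong[OF refl])
    using A by (auto simp: e_sum e_0 subset_iff)
  have Dx: "DiracA e mu A (xvecA e A p) \<alpha> = (\<Sum>i\<in>A. \<Sum>j\<in>A. e i (e j (W i j)))"
    unfolding xvec_eq dirac_eq W_def
    apply (rule sum.cong[OF refl])
    apply (subst scaleR_sum_right)
    apply (subst e_sum)
    using A apply blast
    apply (rule sum.cong[OF refl])
    using A by (auto simp: subset_iff e_scale)
  have tm: "e j (e i (U i j)) + e i (e j (W i j)) = (if i = j then - (2 * real (Poly_Mapping.lookup \<alpha> i) + 1 + 2 * mu i) *\<^sub>R p \<alpha> else 0)"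
    if i: "i \<in> A" and j: "j \<in> A" for i j
  proof (cases "i = j")
    case True
    have iA: "i \<in> {1..n}" using i A by auto
    have "U i i + W i i = (2 * real (Poly_Mapping.lookup \<alpha> i) + 1 + 2 * mu i) *\<^sub>R p \<alpha>"
    proof (cases "Poly_Mapping.lookup \<alpha> i = 0")
      case True
      then show ?thesis unfolding U_def W_def by (simp add: cc_def pm_add_minus pm_add_minus' lookup_add)
    next
      case False
      have l: "Poly_Mapping.lookup (\<alpha> - dlt i) i = Poly_Mapping.lookup \<alpha> i - 1"
        by (simp add: lookup_minus)
      show ?thesis unfolding U_def W_def using False
        by (simp add: l lookup_minus pm_minus_add pm_add_minus pm_minus_add' pm_add_minus' lookup_add cc_sum[OF False, symmetric] scaleR_add_left)
    qed
    moreover have "e i (e i (U i i)) + e i (e i (W i i)) = - (U i i + W i i)"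
      using iA by (simp add: e_sq)
    ultimately show ?thesis using True by (simp only: if_True scaleR_minus_left) simp
  next
    case False
    have iA: "i \<in> {1..n}" "j \<in> {1..n}" using i j A by auto
    have "U i j = W i j"
      unfolding U_def W_def using False
      by (auto simp: lookup_add lookup_minus lookup_single when_def pm_swap pm_swap')
    then show ?thesis using False iA e_anti[of j i] by simp
  qed
  have "xvecA e A (DiracA e mu A p) \<alpha> + DiracA e mu A (xvecA e A p) \<alpha>
      = (\<Sum>i\<in>A. \<Sum>j\<in>A. e j (e i (U i j)) + e i (e j (W i j)))"
  proof -
    have "(\<Sum>j\<in>A. \<Sum>i\<in>A. e j (e i (U i j))) = (\<Sum>i\<in>A. \<Sum>j\<in>A. e j (e i (U i j)))"
      by (rule sum.swap)
    then show ?thesis unfolding xD Dx by (simp only: sum.distrib)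
  qed
  also have "\<dots> = (\<Sum>i\<in>A. - (2 * real (Poly_Mapping.lookup \<alpha> i) + 1 + 2 * mu i) *\<^sub>R p \<alpha>)"
    using fin by (simp add: tm if_distrib cong: sum.cong)
  also have "\<dots> = - (2 * real (\<Sum>i\<in>A. Poly_Mapping.lookup \<alpha> i) + real (card A) + 2 * (\<Sum>i\<in>A. mu i)) *\<^sub>R p \<alpha>"
    by (simp add: scaleR_sum_left[symmetric] sum.distrib sum_distrib_left sum_negf sum_subtractf)
  finally show ?thesis .
qed

end

definition lin_op :: "('v::real_vector vpoly \<Rightarrow> 'w::real_vector vpoly) \<Rightarrow> bool" where
  "lin_op F \<longleftrightarrow> (\<forall>p q. F (\<lambda>\<alpha>. p \<alpha> + q \<alpha>) = (\<lambda>\<alpha>. F p \<alpha> + F q \<alpha>)) \<and> (\<forall>c p. F (\<lambda>\<alpha>. c *\<^sub>R p \<alpha>) = (\<lambda>\<alpha>. c *\<^sub>R F p \<alpha>))"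

lemma lin_add: "lin_op F \<Longrightarrow> F (\<lambda>\<alpha>. p \<alpha> + q \<alpha>) = (\<lambda>\<alpha>. F p \<alpha> + F q \<alpha>)"
  by (simp add: lin_op_def)
lemma lin_scale: "lin_op F \<Longrightarrow> F (\<lambda>\<alpha>. c *\<^sub>R p \<alpha>) = (\<lambda>\<alpha>. c *\<^sub>R F p \<alpha>)"
  by (simp add: lin_op_def)
lemma lin_zero: "lin_op F \<Longrightarrow> F (\<lambda>\<alpha>. 0) = (\<lambda>\<alpha>. 0)"
  using lin_scale[of F 0 "\<lambda>\<alpha>. 0"] by simp
lemma lin_neg: "lin_op F \<Longrightarrow> F (\<lambda>\<alpha>. - p \<alpha>) = (\<lambda>\<alpha>. - F p \<alpha>)"
  using lin_scale[of F "-1" p] by simp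
lemma lin_diff: "lin_op F \<Longrightarrow> F (\<lambda>\<alpha>. p \<alpha> - q \<alpha>) = (\<lambda>\<alpha>. F p \<alpha> - F q \<alpha>)"
  using lin_add[of F p "\<lambda>\<alpha>. - q \<alpha>"] lin_neg[of F q] by simp
lemma lin_sum: "lin_op F \<Longrightarrow> F (\<lambda>\<alpha>. \<Sum>k\<in>K. g k \<alpha>) = (\<lambda>\<alpha>. \<Sum>k\<in>K. F (g k) \<alpha>)"
proof (induction K rule: infinite_finite_induct)
  case (infinite K) then show ?case by (simp add: lin_zero)
next
  case empty then show ?case by (simp add: lin_zero)
next
  case (insert x F')
  then show ?case using lin_add[of F "g x" "\<lambda>\<alpha>. \<Sum>k\<in>F'. g k \<alpha>"] by simp
qed
lemma lin_comp: "lin_op F \<Longrightarrow> lin_op G \<Longrightarrow> lin_op (\<lambda>p. F (G p))"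
  by (simp add: lin_op_def)
lemma lin_pow: fixes F :: "'v::real_vector vpoly \<Rightarrow> 'v vpoly" shows "lin_op F \<Longrightarrow> lin_op (F ^^ k)"
proof (induction k)
  case 0 have eq: "F ^^ 0 = (\<lambda>p. p)" by (simp add: fun_eq_iff)
  show ?case unfolding eq by (simp add: lin_op_def)
next
  case (Suc k)
  have l: "lin_op (\<lambda>p. F ((F ^^ k) p))" by (rule lin_comp[OF Suc.prems Suc.IH[OF Suc.prems]])
  have eq: "F ^^ Suc k = (\<lambda>p. F ((F ^^ k) p))" by (simp add: fun_eq_iff)
  show ?case unfolding eq by (rule l)
qed
lemma lin_id: "lin_op (\<lambda>p. p)"
  by (simp add: lin_op_def)

lemma lin_coef: "(\<And>p \<alpha>. F p \<alpha> = G \<alpha> (p \<alpha>) (\<lambda>\<beta>. p \<beta>)) \<Longrightarrow> True" by simp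

lemma lin_mulx: "lin_op (mulx i)"
  by (auto simp: lin_op_def mulx_def fun_eq_iff)
lemma lin_dunkl: "lin_op (dunkl mu i)"
  by (auto simp: lin_op_def dunkl_eq fun_eq_iff scaleR_add_right)
lemma lin_refl: "lin_op (refl i)"
  by (auto simp: lin_op_def refl_def fun_eq_iff scaleR_add_right)
lemma lin_reflA: "lin_op (reflA A)"
  by (auto simp: lin_op_def reflA_def fun_eq_iff scaleR_add_right)
lemma lin_Eul: "lin_op (Eul A)"
  by (auto simp: lin_op_def Eul_def fun_eq_iff scaleR_add_right)

context CL begin

lemma lin_Eop: "i \<in> {1..n} \<Longrightarrow> lin_op (Eop e i)"
  by (auto simp: lin_op_def Eop_def fun_eq_iff e_add e_scale)

lemma lin_xvec: "A \<subseteq> {1..n} \<Longrightarrow> lin_op (xvecA e A)"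
  unfolding lin_op_def xvecA_def lin_add[OF lin_mulx] lin_scale[OF lin_mulx]
  by (auto simp: fun_eq_iff e_add e_scale subset_iff sum.distrib scaleR_sum_right intro!: sum.cong)

lemma lin_dirac: "A \<subseteq> {1..n} \<Longrightarrow> lin_op (DiracA e mu A)"
  unfolding lin_op_def DiracA_def lin_add[OF lin_dunkl] lin_scale[OF lin_dunkl]
  by (auto simp: fun_eq_iff e_add e_scale subset_iff sum.distrib scaleR_sum_right intro!: sum.cong)

lemma lin_SA: "A \<subseteq> {1..n} \<Longrightarrow> lin_op (SA e mu A)"
proof -
  assume A: "A \<subseteq> {1..n}"
  note X = lin_xvec[OF A] and D = lin_dirac[OF A]
  show ?thesis unfolding lin_op_def SA_def
    by (simp add: lin_add[OF X] lin_add[OF D] lin_scale[OF X] lin_scale[OF D] algebra_simps)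
qed

lemma lin_Gamma: "A \<subseteq> {1..n} \<Longrightarrow> lin_op (GammaOp e mu A)"
proof -
  assume A: "A \<subseteq> {1..n}"
  have "lin_op (\<lambda>p. SA e mu A (reflA A p))" by (rule lin_comp[OF lin_SA[OF A] lin_reflA])
  then show ?thesis unfolding GammaOp_def[abs_def] .
qed

end

lemma lk_minus_self: "Poly_Mapping.lookup (\<alpha> - dlt i) i = Poly_Mapping.lookup \<alpha> i - 1"
  by (simp add: lookup_minus)
lemma lk_minus_other: "k \<noteq> i \<Longrightarrow> Poly_Mapping.lookup (\<alpha> - dlt i) k = Poly_Mapping.lookup \<alpha> k"
  by (simp add: lookup_minus lookup_single when_def)
lemma lk_plus_self: "Poly_Mapping.lookup (\<alpha> + dlt i) i = Poly_Mapping.lookup \<alpha> i + 1"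
  by (simp add: lookup_add)
lemma lk_plus_other: "k \<noteq> i \<Longrightarrow> Poly_Mapping.lookup (\<alpha> + dlt i) k = Poly_Mapping.lookup \<alpha> k"
  by (simp add: lookup_add lookup_single when_def)

lemma deg_minus:
  assumes "finite A" "i \<in> A" "Poly_Mapping.lookup \<alpha> i \<noteq> 0"
  shows "(\<Sum>k\<in>A. Poly_Mapping.lookup (\<alpha> - dlt i) k) + 1 = (\<Sum>k\<in>A. Poly_Mapping.lookup \<alpha> k)"
proof -
  have "(\<Sum>k\<in>A. Poly_Mapping.lookup (\<alpha> - dlt i) k) = Poly_Mapping.lookup (\<alpha> - dlt i) i + (\<Sum>k\<in>A-{i}. Poly_Mapping.lookup (\<alpha> - dlt i) k)"
    using assms by (simp add: sum.remove)
  also have "(\<Sum>k\<in>A-{i}. Poly_Mapping.lookup (\<alpha> - dlt i) k) = (\<Sum>k\<in>A-{i}. Poly_Mapping.lookup \<alpha> k)"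
    by (rule sum.cong) (auto simp: lookup_minus lookup_single when_def)
  finally show ?thesis using assms by (simp add: sum.remove lookup_minus)
qed

lemma deg_plus:
  assumes "finite A" "i \<in> A"
  shows "(\<Sum>k\<in>A. Poly_Mapping.lookup (\<alpha> + dlt i) k) = (\<Sum>k\<in>A. Poly_Mapping.lookup \<alpha> k) + 1"
proof -
  have "(\<Sum>k\<in>A. Poly_Mapping.lookup (\<alpha> + dlt i) k) = Poly_Mapping.lookup (\<alpha> + dlt i) i + (\<Sum>k\<in>A-{i}. Poly_Mapping.lookup (\<alpha> + dlt i) k)"
    using assms by (simp add: sum.remove)
  also have "(\<Sum>k\<in>A-{i}. Poly_Mapping.lookup (\<alpha> + dlt i) k) = (\<Sum>k\<in>A-{i}. Poly_Mapping.lookup \<alpha> k)"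
    by (rule sum.cong) (auto simp: lookup_add lookup_single when_def)
  finally show ?thesis using assms by (simp add: sum.remove lookup_add)
qed

lemma deg_minus_other: "i \<notin> A \<Longrightarrow> (\<Sum>k\<in>A. Poly_Mapping.lookup (\<alpha> - dlt i) k) = (\<Sum>k\<in>A. Poly_Mapping.lookup \<alpha> k)"
  by (rule sum.cong) (auto simp: lookup_minus lookup_single when_def)
lemma deg_plus_other: "i \<notin> A \<Longrightarrow> (\<Sum>k\<in>A. Poly_Mapping.lookup (\<alpha> + dlt i) k) = (\<Sum>k\<in>A. Poly_Mapping.lookup \<alpha> k)"
  by (rule sum.cong) (auto simp: lookup_add lookup_single when_def)

definition sgnA :: "nat set \<Rightarrow> (nat \<Rightarrow>\<^sub>0 nat) \<Rightarrow> real" where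
  "sgnA A \<alpha> = (\<Prod>k\<in>A. (-1::real) ^ Poly_Mapping.lookup \<alpha> k)"

lemma reflA_eq: "reflA A p \<alpha> = sgnA A \<alpha> *\<^sub>R p \<alpha>"
  by (simp add: reflA_def sgnA_def)

lemma sgn_minus:
  assumes "finite A" "i \<in> A" "Poly_Mapping.lookup \<alpha> i \<noteq> 0"
  shows "sgnA A (\<alpha> - dlt i) = - sgnA A \<alpha>"
proof -
  have eq: "(\<Prod>k\<in>A-{i}. (-1::real) ^ Poly_Mapping.lookup (\<alpha> - dlt i) k) = (\<Prod>k\<in>A-{i}. (-1::real) ^ Poly_Mapping.lookup \<alpha> k)"
    by (rule prod.cong) (auto simp: lookup_minus lookup_single when_def)
  obtain m where m: "Poly_Mapping.lookup \<alpha> i = Suc m" using assms(3) not0_implies_Suc by blast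
  show ?thesis unfolding sgnA_def prod.remove[OF assms(1,2)] eq
    by (simp add: lookup_minus m)
qed

lemma sgn_plus:
  assumes "finite A" "i \<in> A"
  shows "sgnA A (\<alpha> + dlt i) = - sgnA A \<alpha>"
proof -
  have eq: "(\<Prod>k\<in>A-{i}. (-1::real) ^ Poly_Mapping.lookup (\<alpha> + dlt i) k) = (\<Prod>k\<in>A-{i}. (-1::real) ^ Poly_Mapping.lookup \<alpha> k)"
    by (rule prod.cong) (auto simp: lookup_add lookup_single when_def)
  show ?thesis unfolding sgnA_def prod.remove[OF assms(1,2)] eq
    by (simp add: lookup_add)
qed

lemma sgn_minus_other: "i \<notin> A \<Longrightarrow> sgnA A (\<alpha> - dlt i) = sgnA A \<alpha>"
  unfolding sgnA_def by (rule prod.cong) (auto simp: lookup_minus lookup_single when_def)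
lemma sgn_plus_other: "i \<notin> A \<Longrightarrow> sgnA A (\<alpha> + dlt i) = sgnA A \<alpha>"
  unfolding sgnA_def by (rule prod.cong) (auto simp: lookup_add lookup_single when_def)

lemma half_half: fixes a :: "'a::real_vector" shows "(1/2::real) *\<^sub>R a + (1/2::real) *\<^sub>R a = a"
proof -
  have "(1/2 + 1/2::real) *\<^sub>R a = a" by simp
  then show ?thesis by (simp only: scaleR_add_left)
qed

context CL begin

lemma Eul_xvec:
  assumes A: "A \<subseteq> {1..n}"
  shows "Eul A (xvecA e A p) = (\<lambda>\<alpha>. xvecA e A (Eul A p) \<alpha> + xvecA e A p \<alpha>)"
proof (rule ext)
  fix \<alpha>
  have fin: "finite A" using A finite_subset by blast
  have "xvecA e A (Eul A p) \<alpha> + xvecA e A p \<alpha> =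
     (\<Sum>i\<in>A. e i (if Poly_Mapping.lookup \<alpha> i = 0 then 0 else real (\<Sum>k\<in>A. Poly_Mapping.lookup \<alpha> k) *\<^sub>R p (\<alpha> - dlt i)))"
    unfolding xvec_eq sum.distrib[symmetric]
  proof (rule sum.cong[OF refl])
    fix i assume i: "i \<in> A"
    then have iA: "i \<in> {1..n}" using A by auto
    show "e i (if Poly_Mapping.lookup \<alpha> i = 0 then 0 else Eul A p (\<alpha> - dlt i)) +
          e i (if Poly_Mapping.lookup \<alpha> i = 0 then 0 else p (\<alpha> - dlt i)) =
          e i (if Poly_Mapping.lookup \<alpha> i = 0 then 0 else real (\<Sum>k\<in>A. Poly_Mapping.lookup \<alpha> k) *\<^sub>R p (\<alpha> - dlt i))"
    proof (cases "Poly_Mapping.lookup \<alpha> i = 0")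
      case True then show ?thesis using iA by (simp add: e_0)
    next
      case False
      have d: "real (\<Sum>k\<in>A. Poly_Mapping.lookup \<alpha> k) = real (\<Sum>k\<in>A. Poly_Mapping.lookup (\<alpha> - dlt i) k) + 1"
        using arg_cong[OF deg_minus[OF fin i False], of real] by (simp del: of_nat_sum)
      show ?thesis using False iA by (simp add: Eul_def e_add[symmetric] d scaleR_add_left del: of_nat_sum)
    qed
  qed
  also have "\<dots> = Eul A (xvecA e A p) \<alpha>"
    unfolding Eul_def xvec_eq scaleR_sum_right
    by (rule sum.cong[OF refl]) (use A in \<open>auto simp: e_scale e_0 subset_iff\<close>)
  finally show "Eul A (xvecA e A p) \<alpha> = xvecA e A (Eul A p) \<alpha> + xvecA e A p \<alpha>" by simp
qed

lemma dirac_Eul: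
  assumes A: "A \<subseteq> {1..n}"
  shows "DiracA e mu A (Eul A p) = (\<lambda>\<alpha>. Eul A (DiracA e mu A p) \<alpha> + DiracA e mu A p \<alpha>)"
proof (rule ext)
  fix \<alpha>
  have fin: "finite A" using A finite_subset by blast
  have "DiracA e mu A (Eul A p) \<alpha> = (\<Sum>i\<in>A. (real (\<Sum>k\<in>A. Poly_Mapping.lookup \<alpha> k) + 1) *\<^sub>R e i (cc mu i (Poly_Mapping.lookup \<alpha> i) *\<^sub>R p (\<alpha> + dlt i)))"
    unfolding dirac_eq
  proof (rule sum.cong[OF refl])
    fix i assume i: "i \<in> A"
    then have iA: "i \<in> {1..n}" using A by auto
    show "e i (cc mu i (Poly_Mapping.lookup \<alpha> i) *\<^sub>R Eul A p (\<alpha> + dlt i)) =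
      (real (\<Sum>k\<in>A. Poly_Mapping.lookup \<alpha> k) + 1) *\<^sub>R e i (cc mu i (Poly_Mapping.lookup \<alpha> i) *\<^sub>R p (\<alpha> + dlt i))"
      using iA by (simp add: Eul_def deg_plus[OF fin i] e_scale del: of_nat_sum)
  qed
  also have "\<dots> = Eul A (DiracA e mu A p) \<alpha> + DiracA e mu A p \<alpha>"
    by (simp add: Eul_def dirac_eq scaleR_sum_right scaleR_add_left sum.distrib)
  finally show "DiracA e mu A (Eul A p) \<alpha> = Eul A (DiracA e mu A p) \<alpha> + DiracA e mu A p \<alpha>" .
qed

lemma refl_xvec:
  assumes A: "A \<subseteq> {1..n}"
  shows "reflA A (xvecA e A p) = (\<lambda>\<alpha>. - xvecA e A (reflA A p) \<alpha>)"
proof (rule ext)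
  fix \<alpha>
  have fin: "finite A" using A finite_subset by blast
  show "reflA A (xvecA e A p) \<alpha> = - xvecA e A (reflA A p) \<alpha>"
    unfolding reflA_eq xvec_eq scaleR_sum_right sum_negf[symmetric]
  proof (rule sum.cong[OF refl])
    fix i assume i: "i \<in> A"
    then have iA: "i \<in> {1..n}" using A by auto
    show "sgnA A \<alpha> *\<^sub>R e i (if Poly_Mapping.lookup \<alpha> i = 0 then 0 else p (\<alpha> - dlt i)) =
        - e i (if Poly_Mapping.lookup \<alpha> i = 0 then 0 else sgnA A (\<alpha> - dlt i) *\<^sub>R p (\<alpha> - dlt i))"
      using iA sgn_minus[OF fin i] by (auto simp: e_0 e_scale e_neg)
  qed
qed

lemma refl_dirac:
  assumes A: "A \<subseteq> {1..n}"
  shows "reflA A (DiracA e mu A p) = (\<lambda>\<alpha>. - DiracA e mu A (reflA A p) \<alpha>)"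
proof (rule ext)
  fix \<alpha>
  have fin: "finite A" using A finite_subset by blast
  show "reflA A (DiracA e mu A p) \<alpha> = - DiracA e mu A (reflA A p) \<alpha>"
    unfolding reflA_eq dirac_eq scaleR_sum_right sum_negf[symmetric]
  proof (rule sum.cong[OF refl])
    fix i assume i: "i \<in> A"
    then have iA: "i \<in> {1..n}" using A by auto
    show "sgnA A \<alpha> *\<^sub>R e i (cc mu i (Poly_Mapping.lookup \<alpha> i) *\<^sub>R p (\<alpha> + dlt i)) =
        - e i (cc mu i (Poly_Mapping.lookup \<alpha> i) *\<^sub>R (sgnA A (\<alpha> + dlt i) *\<^sub>R p (\<alpha> + dlt i)))"
      using iA sgn_plus[OF fin i] by (auto simp: e_scale e_neg)
  qed
qed

lemma DX_eq:
  assumes A: "A \<subseteq> {1..n}"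
  shows "DiracA e mu A (xvecA e A p) = (\<lambda>\<alpha>. - xvecA e A (DiracA e mu A p) \<alpha> - 2 *\<^sub>R Eul A p \<alpha> - (2 * gammaA mu A) *\<^sub>R p \<alpha>)"
proof (rule ext)
  fix \<alpha>
  show "DiracA e mu A (xvecA e A p) \<alpha> = - xvecA e A (DiracA e mu A p) \<alpha> - 2 *\<^sub>R Eul A p \<alpha> - (2 * gammaA mu A) *\<^sub>R p \<alpha>"
  proof -
    let ?K = "2 * real (\<Sum>i\<in>A. Poly_Mapping.lookup \<alpha> i) + real (card A) + 2 * (\<Sum>i\<in>A. mu i)"
    have h: "DiracA e mu A (xvecA e A p) \<alpha> = - ?K *\<^sub>R p \<alpha> - xvecA e A (DiracA e mu A p) \<alpha>"
      by (metis anticomm[OF A, of p \<alpha>] add_diff_cancel_left')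
    have k: "2 *\<^sub>R Eul A p \<alpha> + (2 * gammaA mu A) *\<^sub>R p \<alpha> = ?K *\<^sub>R p \<alpha>"
      unfolding Eul_def gammaA_def by (simp add: scaleR_add_left[symmetric] del: of_nat_sum)
    show ?thesis unfolding h using k by (simp add: algebra_simps)
  qed
qed

lemma SA_eq:
  assumes A: "A \<subseteq> {1..n}"
  shows "SA e mu A p = (\<lambda>\<alpha>. xvecA e A (DiracA e mu A p) \<alpha> + Eul A p \<alpha> + (gammaA mu A - 1/2) *\<^sub>R p \<alpha>)"
  unfolding SA_def DX_eq[OF A] by (simp add: fun_eq_iff algebra_simps half_half)

end

definition Mop :: "(nat \<Rightarrow> real) \<Rightarrow> nat set \<Rightarrow> 'v::real_vector vpoly \<Rightarrow> 'v vpoly" where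
  "Mop mu A p = (\<lambda>\<alpha>. Eul A p \<alpha> + (gammaA mu A - 1/2) *\<^sub>R p \<alpha>)"

context CL begin

lemma SA_M:
  assumes A: "A \<subseteq> {1..n}"
  shows "SA e mu A q = (\<lambda>\<alpha>. xvecA e A (DiracA e mu A q) \<alpha> + Mop mu A q \<alpha>)"
  unfolding SA_eq[OF A] Mop_def by (simp add: add.assoc)

lemma DX_M:
  assumes A: "A \<subseteq> {1..n}"
  shows "DiracA e mu A (xvecA e A q) = (\<lambda>\<alpha>. - xvecA e A (DiracA e mu A q) \<alpha> - 2 *\<^sub>R Mop mu A q \<alpha> - q \<alpha>)"
  unfolding DX_eq[OF A] Mop_def by (simp add: fun_eq_iff algebra_simps scaleR_2)

lemma M_xvec:
  assumes A: "A \<subseteq> {1..n}"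
  shows "Mop mu A (xvecA e A q) = (\<lambda>\<alpha>. xvecA e A (Mop mu A q) \<alpha> + xvecA e A q \<alpha>)"
proof -
  note X = lin_xvec[OF A]
  show ?thesis unfolding Mop_def Eul_xvec[OF A]
    by (simp add: lin_add[OF X] lin_diff[OF X] lin_scale[OF X] fun_eq_iff algebra_simps)
qed

lemma dirac_M:
  assumes A: "A \<subseteq> {1..n}"
  shows "DiracA e mu A (Mop mu A q) = (\<lambda>\<alpha>. Mop mu A (DiracA e mu A q) \<alpha> + DiracA e mu A q \<alpha>)"
proof -
  note D = lin_dirac[OF A]
  show ?thesis unfolding Mop_def
    by (simp add: lin_add[OF D] lin_diff[OF D] lin_scale[OF D] dirac_Eul[OF A] fun_eq_iff algebra_simps)
qed

lemma SX:
  assumes A: "A \<subseteq> {1..n}"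
  shows "SA e mu A (xvecA e A q) = (\<lambda>\<alpha>. - xvecA e A (SA e mu A q) \<alpha>)"
proof -
  note X = lin_xvec[OF A]
  show ?thesis
    unfolding SA_M[OF A] DX_M[OF A] M_xvec[OF A]
    by (simp add: lin_add[OF X] lin_diff[OF X] lin_neg[OF X] lin_scale[OF X] fun_eq_iff algebra_simps scaleR_2)
qed

lemma SD:
  assumes A: "A \<subseteq> {1..n}"
  shows "SA e mu A (DiracA e mu A q) = (\<lambda>\<alpha>. - DiracA e mu A (SA e mu A q) \<alpha>)"
proof -
  note D = lin_dirac[OF A]
  show ?thesis
    unfolding SA_M[OF A]
    by (simp add: lin_add[OF D] lin_diff[OF D] lin_neg[OF D] lin_scale[OF D] DX_M[OF A] dirac_M[OF A] fun_eq_iff algebra_simps scaleR_2)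
qed

lemma Gamma_xvec:
  assumes A: "A \<subseteq> {1..n}"
  shows "GammaOp e mu A (xvecA e A p) = xvecA e A (GammaOp e mu A p)"
  unfolding GammaOp_def refl_xvec[OF A] lin_neg[OF lin_SA[OF A]] SX[OF A] by simp

lemma Gamma_dirac:
  assumes A: "A \<subseteq> {1..n}"
  shows "GammaOp e mu A (DiracA e mu A p) = DiracA e mu A (GammaOp e mu A p)"
  unfolding GammaOp_def refl_dirac[OF A] lin_neg[OF lin_SA[OF A]] SD[OF A] by simp

lemma xvec_Eop:
  assumes A: "A \<subseteq> {1..n}" and j: "j \<in> {1..n}" "j \<notin> A"
  shows "xvecA e A (Eop e j p) = (\<lambda>\<alpha>. - Eop e j (xvecA e A p) \<alpha>)"
proof (rule ext)
  fix \<alpha>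
  show "xvecA e A (Eop e j p) \<alpha> = - Eop e j (xvecA e A p) \<alpha>"
    unfolding xvec_eq Eop_def e_sum[OF j(1)] sum_negf[symmetric]
  proof (rule sum.cong[OF refl])
    fix i assume i: "i \<in> A"
    then have iA: "i \<in> {1..n}" "i \<noteq> j" using A j by auto
    show "e i (if Poly_Mapping.lookup \<alpha> i = 0 then 0 else e j (p (\<alpha> - dlt i))) =
          - e j (e i (if Poly_Mapping.lookup \<alpha> i = 0 then 0 else p (\<alpha> - dlt i)))"
      using iA j e_anti[of j i] by (auto simp: e_0)
  qed
qed

lemma dirac_Eop:
  assumes A: "A \<subseteq> {1..n}" and j: "j \<in> {1..n}" "j \<notin> A"
  shows "DiracA e mu A (Eop e j p) = (\<lambda>\<alpha>. - Eop e j (DiracA e mu A p) \<alpha>)"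
proof (rule ext)
  fix \<alpha>
  show "DiracA e mu A (Eop e j p) \<alpha> = - Eop e j (DiracA e mu A p) \<alpha>"
    unfolding dirac_eq Eop_def e_sum[OF j(1)] sum_negf[symmetric]
  proof (rule sum.cong[OF refl])
    fix i assume i: "i \<in> A"
    then have iA: "i \<in> {1..n}" "i \<noteq> j" using A j by auto
    show "e i (cc mu i (Poly_Mapping.lookup \<alpha> i) *\<^sub>R e j (p (\<alpha> + dlt i))) =
          - e j (e i (cc mu i (Poly_Mapping.lookup \<alpha> i) *\<^sub>R p (\<alpha> + dlt i)))"
      using iA j e_anti[of j i] by (auto simp: e_scale)
  qed
qed

lemma refl_Eop: "j \<in> {1..n} \<Longrightarrow> reflA A (Eop e j p) = Eop e j (reflA A p)"
  by (simp add: fun_eq_iff reflA_eq Eop_def e_scale)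

lemma SA_Eop:
  assumes A: "A \<subseteq> {1..n}" and j: "j \<in> {1..n}" "j \<notin> A"
  shows "SA e mu A (Eop e j p) = Eop e j (SA e mu A p)"
proof -
  note X = lin_xvec[OF A] and D = lin_dirac[OF A]
  show ?thesis
    unfolding SA_def xvec_Eop[OF A j] dirac_Eop[OF A j] lin_neg[OF X] lin_neg[OF D]
      xvec_Eop[OF A j] dirac_Eop[OF A j]
    by (simp add: fun_eq_iff Eop_def e_scale[OF j(1)] e_diff[OF j(1)])
qed

lemma Gamma_Eop:
  assumes A: "A \<subseteq> {1..n}" and j: "j \<in> {1..n}" "j \<notin> A"
  shows "GammaOp e mu A (Eop e j p) = Eop e j (GammaOp e mu A p)"
  unfolding GammaOp_def refl_Eop[OF j(1)] SA_Eop[OF A j] ..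

lemma xvec_mulx:
  assumes A: "A \<subseteq> {1..n}" and j: "j \<notin> A"
  shows "xvecA e A (mulx j p) = mulx j (xvecA e A p)"
proof (rule ext)
  fix \<alpha>
  show "xvecA e A (mulx j p) \<alpha> = mulx j (xvecA e A p) \<alpha>"
  proof (cases "Poly_Mapping.lookup \<alpha> j = 0")
    case True
    show ?thesis unfolding xvec_eq mulx_eq using True
      by (auto intro!: sum.neutral simp: lookup_minus lookup_single when_def e_0 subset_iff A[unfolded subset_iff] dest: A[unfolded subset_iff, rule_format])
  next
    case False
    show ?thesis unfolding xvec_eq mulx_eq using False
    proof (simp, intro sum.cong refl)
      fix i assume i: "i \<in> A"
      then have "i \<noteq> j" using j by auto
      then show "e i (if Poly_Mapping.lookup \<alpha> i = 0 then 0 else if Poly_Mapping.lookup (\<alpha> - dlt i) j = 0 then 0 else p (\<alpha> - dlt i - dlt j)) =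
        e i (if Poly_Mapping.lookup (\<alpha> - dlt j) i = 0 then 0 else p (\<alpha> - dlt j - dlt i))"
        using False Groups.cancel_ab_semigroup_add_class.diff_right_commute[of \<alpha> "dlt i" "dlt j"] by (simp add: lookup_minus lookup_single when_def)
    qed
  qed
qed

lemma dirac_mulx:
  assumes A: "A \<subseteq> {1..n}" and j: "j \<notin> A"
  shows "DiracA e mu A (mulx j p) = mulx j (DiracA e mu A p)"
proof (rule ext)
  fix \<alpha>
  show "DiracA e mu A (mulx j p) \<alpha> = mulx j (DiracA e mu A p) \<alpha>"
  proof (cases "Poly_Mapping.lookup \<alpha> j = 0")
    case True
    show ?thesis unfolding dirac_eq mulx_eq using True
    proof (simp, intro sum.neutral ballI)
      fix i assume i: "i \<in> A"
      then have "i \<noteq> j" "i \<in> {1..n}" using j A by auto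
      then show "e i (cc mu i (Poly_Mapping.lookup \<alpha> i) *\<^sub>R (if Poly_Mapping.lookup (\<alpha> + dlt i) j = 0 then 0 else p (\<alpha> + dlt i - dlt j))) = 0"
        using True by (simp add: lookup_add lookup_single when_def e_0)
    qed
  next
    case False
    show ?thesis unfolding dirac_eq mulx_eq using False
    proof (simp, intro sum.cong refl)
      fix i assume i: "i \<in> A"
      then have ij: "i \<noteq> j" using j by auto
      then show "e i (cc mu i (Poly_Mapping.lookup \<alpha> i) *\<^sub>R (if Poly_Mapping.lookup (\<alpha> + dlt i) j = 0 then 0 else p (\<alpha> + dlt i - dlt j))) =
        e i (cc mu i (Poly_Mapping.lookup (\<alpha> - dlt j) i) *\<^sub>R p (\<alpha> - dlt j + dlt i))"
        using False pm_swap[OF ij, of \<alpha>] by (simp add: lookup_add lookup_minus lookup_single when_def)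
    qed
  qed
qed

lemma refl_mulx: "j \<notin> A \<Longrightarrow> reflA A (mulx j p) = mulx j (reflA A p)"
  by (simp add: fun_eq_iff reflA_eq mulx_eq sgn_minus_other)

lemma xvec_dunkl:
  assumes A: "A \<subseteq> {1..n}" and j: "j \<notin> A"
  shows "xvecA e A (dunkl mu j p) = dunkl mu j (xvecA e A p)"
proof (rule ext)
  fix \<alpha>
  show "xvecA e A (dunkl mu j p) \<alpha> = dunkl mu j (xvecA e A p) \<alpha>"
    unfolding xvec_eq dunkl_eq scaleR_sum_right
  proof (rule sum.cong[OF refl])
    fix i assume i: "i \<in> A"
    then have ij: "j \<noteq> i" and iA: "i \<in> {1..n}" using j A by auto
    show "e i (if Poly_Mapping.lookup \<alpha> i = 0 then 0 else cc mu j (Poly_Mapping.lookup (\<alpha> - dlt i) j) *\<^sub>R p (\<alpha> - dlt i + dlt j)) =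
      cc mu j (Poly_Mapping.lookup \<alpha> j) *\<^sub>R e i (if Poly_Mapping.lookup (\<alpha> + dlt j) i = 0 then 0 else p (\<alpha> + dlt j - dlt i))"
      using pm_swap[OF ij, of \<alpha>] ij iA by (auto simp: lookup_add lookup_minus lookup_single when_def e_0 e_scale)
  qed
qed

lemma dirac_dunkl:
  assumes A: "A \<subseteq> {1..n}" and j: "j \<notin> A"
  shows "DiracA e mu A (dunkl mu j p) = dunkl mu j (DiracA e mu A p)"
proof (rule ext)
  fix \<alpha>
  show "DiracA e mu A (dunkl mu j p) \<alpha> = dunkl mu j (DiracA e mu A p) \<alpha>"
    unfolding dirac_eq dunkl_eq scaleR_sum_right
  proof (rule sum.cong[OF refl])
    fix i assume i: "i \<in> A"
    then have ij: "j \<noteq> i" and iA: "i \<in> {1..n}" using j A by auto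
    have c: "\<alpha> + dlt i + dlt j = \<alpha> + dlt j + dlt i" by (simp add: add_ac)
    show "e i (cc mu i (Poly_Mapping.lookup \<alpha> i) *\<^sub>R (cc mu j (Poly_Mapping.lookup (\<alpha> + dlt i) j) *\<^sub>R p (\<alpha> + dlt i + dlt j))) =
      cc mu j (Poly_Mapping.lookup \<alpha> j) *\<^sub>R e i (cc mu i (Poly_Mapping.lookup (\<alpha> + dlt j) i) *\<^sub>R p (\<alpha> + dlt j + dlt i))"
      using ij iA by (simp add: c lookup_add lookup_single when_def e_scale)
  qed
qed

lemma refl_dunkl: "j \<notin> A \<Longrightarrow> reflA A (dunkl mu j p) = dunkl mu j (reflA A p)"
  by (simp add: fun_eq_iff reflA_eq dunkl_eq sgn_plus_other)

lemma Gamma_mulx: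
  assumes A: "A \<subseteq> {1..n}" and j: "j \<notin> A"
  shows "GammaOp e mu A (mulx j p) = mulx j (GammaOp e mu A p)"
  unfolding GammaOp_def SA_def refl_mulx[OF j] xvec_mulx[OF A j] dirac_mulx[OF A j]
    lin_diff[OF lin_mulx] lin_scale[OF lin_mulx] ..

lemma Gamma_dunkl:
  assumes A: "A \<subseteq> {1..n}" and j: "j \<notin> A"
  shows "GammaOp e mu A (dunkl mu j p) = dunkl mu j (GammaOp e mu A p)"
  unfolding GammaOp_def SA_def refl_dunkl[OF j] xvec_dunkl[OF A j] dirac_dunkl[OF A j]
    lin_diff[OF lin_dunkl] lin_scale[OF lin_dunkl] ..

lemma dirac_union:
  assumes "finite A" "finite C" "A \<inter> C = {}"
  shows "DiracA e mu (A \<union> C) p = (\<lambda>\<alpha>. DiracA e mu A p \<alpha> + DiracA e mu C p \<alpha>)"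
  unfolding DiracA_def using assms by (simp add: sum.union_disjoint)

lemma xvec_union:
  assumes "finite A" "finite C" "A \<inter> C = {}"
  shows "xvecA e (A \<union> C) p = (\<lambda>\<alpha>. xvecA e A p \<alpha> + xvecA e C p \<alpha>)"
  unfolding xvecA_def using assms by (simp add: sum.union_disjoint)

lemma Gamma_dirac_disj:
  assumes A: "A \<subseteq> {1..n}" and C: "C \<subseteq> {1..n}" "A \<inter> C = {}"
  shows "GammaOp e mu A (DiracA e mu C p) = DiracA e mu C (GammaOp e mu A p)"
proof -
  have rep: "DiracA e mu C q = (\<lambda>\<alpha>. \<Sum>i\<in>C. Eop e i (dunkl mu i q) \<alpha>)" for q
    by (simp add: DiracA_def Eop_def)
  then show ?thesis
  proof -
    have "GammaOp e mu A (Eop e i (dunkl mu i p)) = Eop e i (dunkl mu i (GammaOp e mu A p))" if i: "i \<in> C" for i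
    proof -
      have "i \<in> {1..n}" "i \<notin> A" using i C by auto
      then show ?thesis by (simp add: Gamma_Eop[OF A] Gamma_dunkl[OF A])
    qed
    then show ?thesis using rep by (simp add: lin_sum[OF lin_Gamma[OF A]])
  qed
qed

lemma Gamma_xvec_disj:
  assumes A: "A \<subseteq> {1..n}" and C: "C \<subseteq> {1..n}" "A \<inter> C = {}"
  shows "GammaOp e mu A (xvecA e C p) = xvecA e C (GammaOp e mu A p)"
proof -
  have rep: "xvecA e C q = (\<lambda>\<alpha>. \<Sum>i\<in>C. Eop e i (mulx i q) \<alpha>)" for q
    by (simp add: xvecA_def Eop_def)
  then show ?thesis
  proof -
    have "GammaOp e mu A (Eop e i (mulx i p)) = Eop e i (mulx i (GammaOp e mu A p))" if i: "i \<in> C" for i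
    proof -
      have "i \<in> {1..n}" "i \<notin> A" using i C by auto
      then show ?thesis by (simp add: Gamma_Eop[OF A] Gamma_mulx[OF A])
    qed
    then show ?thesis using rep by (simp add: lin_sum[OF lin_Gamma[OF A]])
  qed
qed

lemma Gamma_dirac_super:
  assumes A: "A \<subseteq> B" and B: "B \<subseteq> {1..n}"
  shows "GammaOp e mu A (DiracA e mu B p) = DiracA e mu B (GammaOp e mu A p)"
proof -
  have A': "A \<subseteq> {1..n}" using A B by auto
  have fB: "finite B" using B by (rule finite_subset) simp
  have fin: "finite A" "finite (B - A)" using A fB finite_subset by auto
  have BU: "B = A \<union> (B - A)" using A by auto
  show ?thesis
    apply (subst (1 2) BU)
    unfolding dirac_union[OF fin Diff_disjoint] lin_add[OF lin_Gamma[OF A']]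
      Gamma_dirac[OF A'] Gamma_dirac_disj[OF A' _ Diff_disjoint, OF order.trans[OF Diff_subset B]] ..
  
qed

lemma Gamma_xvec_super:
  assumes A: "A \<subseteq> B" and B: "B \<subseteq> {1..n}"
  shows "GammaOp e mu A (xvecA e B p) = xvecA e B (GammaOp e mu A p)"
proof -
  have A': "A \<subseteq> {1..n}" using A B by auto
  have fB: "finite B" using B by (rule finite_subset) simp
  have fin: "finite A" "finite (B - A)" using A fB finite_subset by auto
  have BU: "B = A \<union> (B - A)" using A by auto
  show ?thesis
    apply (subst (1 2) BU)
    unfolding xvec_union[OF fin Diff_disjoint] lin_add[OF lin_Gamma[OF A']]
      Gamma_xvec[OF A'] Gamma_xvec_disj[OF A' _ Diff_disjoint, OF order.trans[OF Diff_subset B]] ..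
  
qed

end

definition hsup :: "nat \<Rightarrow> nat \<Rightarrow> 'v::real_vector vpoly \<Rightarrow> bool" where
  "hsup j d p \<longleftrightarrow> (\<forall>\<alpha>. p \<alpha> \<noteq> 0 \<longrightarrow> (\<forall>i. i \<notin> {1..j} \<longrightarrow> Poly_Mapping.lookup \<alpha> i = 0) \<and> (\<Sum>i\<in>{1..j}. Poly_Mapping.lookup \<alpha> i) = d)"

definition zsup :: "nat \<Rightarrow> nat \<Rightarrow> nat \<Rightarrow> 'v::real_vector vpoly \<Rightarrow> bool" where
  "zsup j a d p \<longleftrightarrow> (\<forall>\<alpha>. p \<alpha> \<noteq> 0 \<longrightarrow> (\<forall>i. i \<notin> {1..j} \<longrightarrow> Poly_Mapping.lookup \<alpha> i = 0) \<and> Poly_Mapping.lookup \<alpha> j = a \<and> (\<Sum>i\<in>{1..<j}. Poly_Mapping.lookup \<alpha> i) + a = d)"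

definition zop :: "(nat \<Rightarrow> 'v \<Rightarrow> 'v) \<Rightarrow> (nat \<Rightarrow> real) \<Rightarrow> nat \<Rightarrow> 'v::real_vector vpoly \<Rightarrow> 'v vpoly" where
  "zop e mu j = (\<lambda>p. mulx j (DiracA e mu {1..<j} p))"

lemma hsup_zsup:
  assumes "2 \<le> j" "hsup (j - 1) d f" shows "zsup j 0 d f"
proof -
  have s: "{1..j-1} = {1..<j}" using assms(1) by auto
  show ?thesis using assms(2) unfolding hsup_def zsup_def s by auto
qed

lemma zsup_big: "zsup j a d p \<Longrightarrow> d < a \<Longrightarrow> p = (\<lambda>\<alpha>. 0)"
  unfolding zsup_def by fastforce

lemma zsup_hsup:
  assumes "1 \<le> j" "zsup j a d p" shows "hsup j d p"
proof -
  have s: "{1..j} = insert j {1..<j}" using assms(1) by auto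
  show ?thesis using assms(2) unfolding hsup_def zsup_def s by (auto simp: add.commute)
qed

lemma hsup_add: "hsup j d p \<Longrightarrow> hsup j d q \<Longrightarrow> hsup j d (\<lambda>\<alpha>. p \<alpha> + q \<alpha>)"
  unfolding hsup_def by (metis add.right_neutral)
lemma hsup_scale: "hsup j d p \<Longrightarrow> hsup j d (\<lambda>\<alpha>. c *\<^sub>R p \<alpha>)"
  unfolding hsup_def by (metis scaleR_zero_right)
lemma hsup_zero: "hsup j d (\<lambda>\<alpha>. 0)"
  unfolding hsup_def by simp
lemma hsup_sum: "(\<And>k. k \<in> K \<Longrightarrow> hsup j d (g k)) \<Longrightarrow> hsup j d (\<lambda>\<alpha>. \<Sum>k\<in>K. g k \<alpha>)"
proof (induction K rule: infinite_finite_induct)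
  case (infinite A) then show ?case by (simp add: hsup_zero)
next
  case empty then show ?case by (simp add: hsup_zero)
next
  case (insert x F)
  then show ?case by (simp add: hsup_add)
qed
lemma hsup_mono: "hsup j d p \<Longrightarrow> hsup (Suc j) d p"
proof -
  assume h: "hsup j d p"
  have s: "{1..Suc j} = insert (Suc j) {1..j}" by auto
  show ?thesis using h unfolding hsup_def s by auto
qed

context CL begin

lemma hsup_e: "i \<in> {1..n} \<Longrightarrow> hsup j d p \<Longrightarrow> hsup j d (\<lambda>\<alpha>. e i (p \<alpha>))"
  unfolding hsup_def by (metis e_0)

lemma dirac_nz:
  assumes A: "A \<subseteq> {1..n}" and nz: "DiracA e mu A p \<alpha> \<noteq> 0"
  shows "\<exists>i\<in>A. p (\<alpha> + dlt i) \<noteq> 0"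
proof (rule ccontr)
  assume "\<not> ?thesis"
  then have "DiracA e mu A p \<alpha> = 0"
    unfolding dirac_eq using A by (auto intro!: sum.neutral simp: e_0 subset_iff)
  with nz show False by simp
qed

lemma xvec_nz:
  assumes A: "A \<subseteq> {1..n}" and nz: "xvecA e A p \<alpha> \<noteq> 0"
  shows "\<exists>i\<in>A. Poly_Mapping.lookup \<alpha> i \<noteq> 0 \<and> p (\<alpha> - dlt i) \<noteq> 0"
proof (rule ccontr)
  assume "\<not> ?thesis"
  then have "xvecA e A p \<alpha> = 0"
    unfolding xvec_eq using A by (auto intro!: sum.neutral simp: e_0 subset_iff)
  with nz show False by simp
qed

lemma hsup_xvec:
  assumes j: "j \<le> n" and h: "hsup j d p"
  shows "hsup j (Suc d) (xvecA e {1..j} p)"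
  unfolding hsup_def
proof (intro allI impI)
  fix \<alpha> assume "xvecA e {1..j} p \<alpha> \<noteq> 0"
  then obtain i where i: "i \<in> {1..j}" "Poly_Mapping.lookup \<alpha> i \<noteq> 0" "p (\<alpha> - dlt i) \<noteq> 0"
    using xvec_nz[of "{1..j}" p \<alpha>] j by auto
  have k: "\<forall>k. k \<notin> {1..j} \<longrightarrow> Poly_Mapping.lookup (\<alpha> - dlt i) k = 0"
    and s: "(\<Sum>k\<in>{1..j}. Poly_Mapping.lookup (\<alpha> - dlt i) k) = d"
    using h i(3) unfolding hsup_def by auto
  show "(\<forall>k. k \<notin> {1..j} \<longrightarrow> Poly_Mapping.lookup \<alpha> k = 0) \<and> (\<Sum>k\<in>{1..j}. Poly_Mapping.lookup \<alpha> k) = Suc d"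
  proof
    show "\<forall>k. k \<notin> {1..j} \<longrightarrow> Poly_Mapping.lookup \<alpha> k = 0"
    proof (intro allI impI)
      fix k assume kk: "k \<notin> {1..j}"
      then have ki: "k \<noteq> i" using i by auto
      have "Poly_Mapping.lookup (\<alpha> - dlt i) k = 0" using k kk by blast
      then show "Poly_Mapping.lookup \<alpha> k = 0" using lk_minus_other[OF ki] by simp
    qed
    show "(\<Sum>k\<in>{1..j}. Poly_Mapping.lookup \<alpha> k) = Suc d"
      using deg_minus[of "{1..j}" i \<alpha>] i s by simp
  qed
qed

lemma hsup_xpow:
  assumes j: "j \<le> n" and h: "hsup j d p"
  shows "hsup j (d + k) ((xvecA e {1..j} ^^ k) p)"
proof (induction k)
  case 0 then show ?case using h by simp
next
  case (Suc k) then show ?case using hsup_xvec[OF j Suc.IH] by simp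
qed

lemma zsup_z:
  assumes j: "j \<in> {1..n}" and h: "zsup j a d p"
  shows "zsup j (Suc a) d (zop e mu j p)"
  unfolding zsup_def
proof (intro allI impI)
  fix \<alpha> assume nz: "zop e mu j p \<alpha> \<noteq> 0"
  then have aj: "Poly_Mapping.lookup \<alpha> j \<noteq> 0" and nz2: "DiracA e mu {1..<j} p (\<alpha> - dlt j) \<noteq> 0"
    unfolding zop_def mulx_eq by (auto split: if_splits)
  have sub: "{1..<j} \<subseteq> {1..n}" using j by auto
  obtain i where i: "i \<in> {1..<j}" "p (\<alpha> - dlt j + dlt i) \<noteq> 0"
    using dirac_nz[OF sub nz2] by blast
  have ij: "i \<noteq> j" using i by auto
  have k: "\<forall>k. k \<notin> {1..j} \<longrightarrow> Poly_Mapping.lookup (\<alpha> - dlt j + dlt i) k = 0"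
    and a: "Poly_Mapping.lookup (\<alpha> - dlt j + dlt i) j = a"
    and s: "(\<Sum>k\<in>{1..<j}. Poly_Mapping.lookup (\<alpha> - dlt j + dlt i) k) + a = d"
    using h i(2) unfolding zsup_def by auto
  have s2: "(\<Sum>k\<in>{1..<j}. Poly_Mapping.lookup (\<alpha> - dlt j + dlt i) k) = (\<Sum>k\<in>{1..<j}. Poly_Mapping.lookup \<alpha> k) + 1"
    using deg_plus[of "{1..<j}" i "\<alpha> - dlt j"] deg_minus_other[of j "{1..<j}" \<alpha>] i by simp
  show "(\<forall>k. k \<notin> {1..j} \<longrightarrow> Poly_Mapping.lookup \<alpha> k = 0) \<and> Poly_Mapping.lookup \<alpha> j = Suc a \<and>
        (\<Sum>k\<in>{1..<j}. Poly_Mapping.lookup \<alpha> k) + Suc a = d"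
  proof (intro conjI)
    show "\<forall>k. k \<notin> {1..j} \<longrightarrow> Poly_Mapping.lookup \<alpha> k = 0"
    proof (intro allI impI)
      fix k assume kk: "k \<notin> {1..j}"
      then have ki: "k \<noteq> i" "k \<noteq> j" using i j by auto
      have "Poly_Mapping.lookup (\<alpha> - dlt j + dlt i) k = 0" using k kk by blast
      then show "Poly_Mapping.lookup \<alpha> k = 0" using ki by (simp add: lookup_add lookup_minus lookup_single when_def)
    qed
    show "Poly_Mapping.lookup \<alpha> j = Suc a" using a aj ij by (simp add: lookup_add lookup_minus lookup_single when_def)
    show "(\<Sum>k\<in>{1..<j}. Poly_Mapping.lookup \<alpha> k) + Suc a = d" using s s2 by simp
  qed
qed

lemma zsup_zpow:
  assumes j: "j \<in> {1..n}" and h: "zsup j a d p"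
  shows "zsup j (a + k) d ((zop e mu j ^^ k) p)"
  by (induction k) (auto simp: h zsup_z[OF j])

end

definition ca :: "real \<Rightarrow> nat \<Rightarrow> real" where
  "ca a m = 1 / (4 ^ m * fact m * Gamma (real m + a + 1))"

lemma Itil_fin:
  fixes z :: "'v::real_normed_vector vpoly \<Rightarrow> 'v vpoly"
  assumes "\<forall>m\<ge>N. (z ^^ (2*m)) f = (\<lambda>\<alpha>. 0)"
  shows "Itil a z f = (\<lambda>\<alpha>. \<Sum>m<N. ca a m *\<^sub>R (z ^^ (2*m)) f \<alpha>)"
proof (rule ext)
  fix \<alpha>
  have "suminf (\<lambda>m::nat. (1 / (4 ^ m * fact m * Gamma (real m + a + 1))) *\<^sub>R (z ^^ (2*m)) f \<alpha>) =
        (\<Sum>m\<in>{..<N}. (1 / (4 ^ m * fact m * Gamma (real m + a + 1))) *\<^sub>R (z ^^ (2*m)) f \<alpha>)"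
    by (rule suminf_finite) (use assms in auto)
  then show "Itil a z f \<alpha> = (\<Sum>m<N. ca a m *\<^sub>R (z ^^ (2*m)) f \<alpha>)"
    by (simp add: Itil_def ca_def)
qed

lemma F_pow:
  assumes "\<And>p. F (z p) = z (F p)"
  shows "F ((z ^^ k) p) = (z ^^ k) (F p)"
  by (induction k) (auto simp: assms)

lemma F_Itil:
  fixes z :: "'v::real_normed_vector vpoly \<Rightarrow> 'v vpoly"
  assumes F: "lin_op F" and c: "\<And>p. F (z p) = z (F p)"
    and fin: "\<forall>m\<ge>N. (z ^^ (2*m)) f = (\<lambda>\<alpha>. 0)"
  shows "F (Itil a z f) = Itil a z (F f)"
proof -
  have fin2: "\<forall>m\<ge>N. (z ^^ (2*m)) (F f) = (\<lambda>\<alpha>. 0)"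
    using fin by (simp add: F_pow[of F z, OF c, symmetric] lin_zero[OF F])
  show ?thesis
    unfolding Itil_fin[OF fin] Itil_fin[OF fin2] lin_sum[OF F] lin_scale[OF F] F_pow[of F z, OF c] ..
qed

lemma CK_eq: "CK e mu j f = (\<lambda>\<alpha>. Gamma (mu j + 1/2) *\<^sub>R (Itil (mu j - 1/2) (zop e mu j) f \<alpha> +
    (1/2) *\<^sub>R Eop e j (zop e mu j (Itil (mu j + 1/2) (zop e mu j) f)) \<alpha>))"
  by (simp add: CK_def zop_def Eop_def Let_def)

lemma CK_comm:
  assumes F: "lin_op F" and c: "\<And>p. F (zop e mu j p) = zop e mu j (F p)"
    and cE: "\<And>p. F (Eop e j p) = Eop e j (F p)"
    and fin: "\<forall>m\<ge>N. (zop e mu j ^^ (2*m)) f = (\<lambda>\<alpha>. 0)"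
  shows "F (CK e mu j f) = CK e mu j (F f)"
  unfolding CK_eq lin_scale[OF F] lin_add[OF F] cE c F_Itil[OF F c fin, of "mu j - 1/2"] F_Itil[OF F c fin, of "mu j + 1/2"] ..

context CL begin

lemma lin_zop: "j \<le> Suc n \<Longrightarrow> lin_op (zop e mu j)"
proof -
  assume j: "j \<le> Suc n"
  have "{1..<j} \<subseteq> {1..n}" using j by auto
  then have "lin_op (\<lambda>p. mulx j (DiracA e mu {1..<j} p))" by (rule lin_comp[OF lin_mulx lin_dirac])
  then show ?thesis unfolding zop_def .
qed

lemma z_fin:
  assumes j: "j \<in> {1..n}" "2 \<le> j" and h: "hsup (j - 1) d f"
  shows "\<forall>m\<ge>Suc d. (zop e mu j ^^ (2*m)) f = (\<lambda>\<alpha>. 0)"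
proof (intro allI impI)
  fix m assume m: "Suc d \<le> m"
  have "zsup j (0 + 2*m) d ((zop e mu j ^^ (2*m)) f)"
    by (rule zsup_zpow[OF j(1) hsup_zsup[OF j(2) h]])
  then show "(zop e mu j ^^ (2*m)) f = (\<lambda>\<alpha>. 0)" using m by (intro zsup_big) auto
qed

lemma zpow_hsup:
  assumes j: "j \<in> {1..n}" "2 \<le> j" and h: "hsup (j - 1) d f"
  shows "hsup j d ((zop e mu j ^^ k) f)"
  using zsup_zpow[OF j(1) hsup_zsup[OF j(2) h], of k] j by (intro zsup_hsup) auto

lemma CK_sup:
  assumes j: "j \<in> {1..n}" "2 \<le> j" and h: "hsup (j - 1) d f"
  shows "hsup j d (CK e mu j f)"
proof -
  note fin = z_fin[OF j h]
  have lz: "lin_op (zop e mu j)" using j by (intro lin_zop) auto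
  have zz: "zop e mu j (Itil (mu j + 1/2) (zop e mu j) f) =
     (\<lambda>\<alpha>. \<Sum>m<Suc d. ca (mu j + 1/2) m *\<^sub>R (zop e mu j ^^ Suc (2*m)) f \<alpha>)"
    unfolding Itil_fin[OF fin] lin_sum[OF lz] lin_scale[OF lz] by (simp add: fun_eq_iff del: sum.lessThan_Suc)
  show ?thesis
    unfolding CK_eq zz unfolding Itil_fin[OF fin] Eop_def
    by (intro hsup_scale hsup_add hsup_sum hsup_e[OF j(1)] zpow_hsup[OF j h])
qed

end

lemma pos_not_nonpos_Int: "(x::real) > 0 \<Longrightarrow> x \<notin> \<int>\<^sub>\<le>\<^sub>0"
  using nonpos_Ints_nonpos by fastforce

lemma Gamma_step: "(x::real) > 0 \<Longrightarrow> Gamma (x + 1) = x * Gamma x"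
  by (rule Gamma_plus1[OF pos_not_nonpos_Int])

lemma ca_id1:
  assumes mu: "(\<mu>::real) > 0"
  shows "ca (\<mu> - 1/2) m = 1/2 * ca (\<mu> + 1/2) m * (real (2*m) + 1 + \<mu> * 2)"
proof -
  define x where "x = real m + \<mu> + 1/2"
  have x: "x > 0" using mu by (simp add: x_def)
  have g1: "Gamma (real m + (\<mu> - 1/2) + 1) = Gamma x" by (simp add: x_def algebra_simps)
  have g2: "Gamma (real m + (\<mu> + 1/2) + 1) = x * Gamma x"
    using Gamma_step[OF x] by (simp add: x_def algebra_simps)
  have c: "real (2*m) + 1 + \<mu> * 2 = 2 * x" by (simp add: x_def algebra_simps)
  have "Gamma x > 0" using x by simp
  then show ?thesis unfolding ca_def g1 g2 c using x by (simp add: field_simps)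
qed

lemma ca_id2:
  assumes mu: "(\<mu>::real) > 0"
  shows "ca (\<mu> - 1/2) (Suc m) * (real (Suc (2*m)) + 1) = 1/2 * ca (\<mu> + 1/2) m"
proof -
  define x where "x = real m + \<mu> + 1/2"
  have x: "x > 0" using mu by (simp add: x_def)
  have g1: "Gamma (real (Suc m) + (\<mu> - 1/2) + 1) = Gamma (x + 1)" by (simp add: x_def algebra_simps)
  have g2: "Gamma (real m + (\<mu> + 1/2) + 1) = Gamma (x + 1)" by (simp add: x_def algebra_simps)
  have G: "Gamma (x + 1) > 0" using x by simp
  have f: "fact m > (0::real)" by simp
  have p: "(4::real) ^ m > 0" by simp
  have nz: "fact m * (Gamma (x + 1) * (4 * 4 ^ m)) * (1 + real m) \<noteq> 0"
    using G f p by (intro no_zero_divisors) (auto simp: add_pos_pos)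
  show ?thesis unfolding ca_def g1 g2 using G f p nz by (simp add: field_simps)
qed

lemma cc_even: "cc mu j (2*m) = real (2*m) + 1 + mu j * 2"
  by (simp add: cc_def)
lemma cc_odd: "cc mu j (Suc (2*m)) = real (Suc (2*m)) + 1"
  by (simp add: cc_def)

lemma TX:
  assumes "\<forall>\<alpha>. q \<alpha> \<noteq> 0 \<longrightarrow> Poly_Mapping.lookup \<alpha> j = k"
  shows "dunkl mu j (mulx j q) = (\<lambda>\<alpha>. cc mu j k *\<^sub>R q \<alpha>)"
proof (rule ext)
  fix \<alpha>
  have m: "mulx j q (\<alpha> + dlt j) = q \<alpha>" by (simp add: mulx_eq lookup_add pm_add_minus)
  show "dunkl mu j (mulx j q) \<alpha> = cc mu j k *\<^sub>R q \<alpha>"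
    unfolding dunkl_eq m using assms by (cases "q \<alpha> = 0") auto
qed

context CL begin

lemma dirac_split:
  assumes j: "j \<in> {1..n}"
  shows "DiracA e mu {1..j} p \<alpha> = DiracA e mu {1..<j} p \<alpha> + e j (dunkl mu j p \<alpha>)"
proof -
  have s: "{1..j} = insert j {1..<j}" using j by auto
  show ?thesis unfolding DiracA_def s by simp
qed

lemma Ddeg:
  assumes j: "j \<in> {1..n}" and h: "zsup j k d p"
  shows "\<forall>\<alpha>. DiracA e mu {1..<j} p \<alpha> \<noteq> 0 \<longrightarrow> Poly_Mapping.lookup \<alpha> j = k"
proof (intro allI impI)
  fix \<alpha> assume nz: "DiracA e mu {1..<j} p \<alpha> \<noteq> 0"
  have sub: "{1..<j} \<subseteq> {1..n}" using j by auto
  obtain i where i: "i \<in> {1..<j}" "p (\<alpha> + dlt i) \<noteq> 0" using dirac_nz[OF sub nz] by blast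
  then have "Poly_Mapping.lookup (\<alpha> + dlt i) j = k" using h unfolding zsup_def by blast
  moreover have "i \<noteq> j" using i by auto
  ultimately show "Poly_Mapping.lookup \<alpha> j = k" by (simp add: lookup_add lookup_single when_def)
qed

lemma w0:
  assumes j: "2 \<le> j" and h: "hsup (j - 1) d f"
  shows "dunkl mu j f = (\<lambda>\<alpha>. 0)"
proof (rule ext)
  fix \<alpha>
  have "f (\<alpha> + dlt j) = 0"
  proof (rule ccontr)
    assume "f (\<alpha> + dlt j) \<noteq> 0"
    then have "Poly_Mapping.lookup (\<alpha> + dlt j) j = 0" using h j unfolding hsup_def by auto
    then show False by (simp add: lookup_add)
  qed
  then show "dunkl mu j f \<alpha> = 0" by (simp add: dunkl_eq)
qed

lemma dunkl_Eop: "j \<in> {1..n} \<Longrightarrow> dunkl mu j (Eop e j q) = Eop e j (dunkl mu j q)"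
  by (simp add: fun_eq_iff dunkl_eq Eop_def e_scale)

lemma CK_mono:
  assumes j: "j \<in> {1..n}" "2 \<le> j" and hf: "hsup (j - 1) d f" and mu: "mu j > 0"
  shows "DiracA e mu {1..j} (CK e mu j f) = (\<lambda>\<alpha>. 0)"
proof (rule ext)
  fix \<alpha>
  define z where "z = zop e mu j"
  define D' where "D' = DiracA e mu {1..<j}"
  define h where "h k = (z ^^ k) f" for k
  define a where "a m = ca (mu j - 1/2) m" for m
  define b where "b m = ca (mu j + 1/2) m" for m
  define G where "G = Gamma (mu j + 1/2)"
  define u where "u k = D' (h k) \<alpha>" for k
  define w where "w k = dunkl mu j (h k) \<alpha>" for k
  have sub: "{1..<j} \<subseteq> {1..n}" and jn: "j \<notin> {1..<j}" using j by auto
  note D = lin_dirac[OF sub]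
  have lz: "lin_op z" unfolding z_def using j by (intro lin_zop) auto
  note fin = z_fin[OF j hf]
  have zs: "zsup j k d (h k)" for k
    using zsup_zpow[OF j(1) hsup_zsup[OF j(2) hf], of k] by (simp add: h_def z_def)
  have hS: "h (Suc k) = mulx j (D' (h k))" for k
    by (simp add: h_def z_def zop_def D'_def)
  have wS: "w (Suc k) = cc mu j k *\<^sub>R u k" for k
    unfolding w_def u_def hS TX[OF Ddeg[OF j(1) zs, folded D'_def]] ..
  have w0': "w 0 = 0" unfolding w_def h_def using w0[OF j(2) hf] by simp
  have ulast: "u (Suc (2*d)) = 0"
  proof -
    have "h (Suc (2*d)) = (\<lambda>\<alpha>. 0)" using zsup_big[OF zs] by simp
    then show ?thesis unfolding u_def using lin_zero[OF D] D'_def by simp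
  qed
  define S1 where "S1 = (\<lambda>\<alpha>. \<Sum>m<Suc d. a m *\<^sub>R h (2*m) \<alpha>)"
  define S2 where "S2 = (\<lambda>\<alpha>. \<Sum>m<Suc d. b m *\<^sub>R h (Suc (2*m)) \<alpha>)"
  have zz: "z (Itil (mu j + 1/2) z f) = S2"
    unfolding S2_def b_def h_def Itil_fin[OF fin[folded z_def]] lin_sum[OF lz] lin_scale[OF lz]
    by (simp add: fun_eq_iff del: sum.lessThan_Suc)
  have CKr: "CK e mu j f = (\<lambda>\<alpha>. G *\<^sub>R (S1 \<alpha> + (1/2) *\<^sub>R Eop e j S2 \<alpha>))"
    unfolding CK_eq z_def[symmetric] zz unfolding Itil_fin[OF fin[folded z_def]] S1_def a_def h_def G_def ..
  have DS1: "D' S1 \<alpha> = (\<Sum>m<Suc d. a m *\<^sub>R u (2*m))"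
    unfolding S1_def D'_def lin_sum[OF D] lin_scale[OF D] u_def ..
  have DS2: "D' S2 \<alpha> = (\<Sum>m<Suc d. b m *\<^sub>R u (Suc (2*m)))"
    unfolding S2_def D'_def lin_sum[OF D] lin_scale[OF D] u_def ..
  have TS1: "dunkl mu j S1 \<alpha> = (\<Sum>m<Suc d. a m *\<^sub>R w (2*m))"
    unfolding S1_def lin_sum[OF lin_dunkl] lin_scale[OF lin_dunkl] w_def ..
  have TS2: "dunkl mu j S2 \<alpha> = (\<Sum>m<Suc d. b m *\<^sub>R w (Suc (2*m)))"
    unfolding S2_def lin_sum[OF lin_dunkl] lin_scale[OF lin_dunkl] w_def ..
  have DCK: "D' (CK e mu j f) \<alpha> = G *\<^sub>R (D' S1 \<alpha> - (1/2) *\<^sub>R e j (D' S2 \<alpha>))"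
    unfolding CKr D'_def lin_scale[OF D] lin_add[OF D] dirac_Eop[OF sub j(1) jn]
    by (simp add: Eop_def)
  have TCK: "dunkl mu j (CK e mu j f) \<alpha> = G *\<^sub>R (dunkl mu j S1 \<alpha> + (1/2) *\<^sub>R e j (dunkl mu j S2 \<alpha>))"
    unfolding CKr lin_scale[OF lin_dunkl] lin_add[OF lin_dunkl] dunkl_Eop[OF j(1)]
    by (simp add: Eop_def)
  have B1: "D' S1 \<alpha> - (1/2) *\<^sub>R (\<Sum>m<Suc d. b m *\<^sub>R w (Suc (2*m))) = 0"
  proof -
    have "(1/2::real) *\<^sub>R (\<Sum>m<Suc d. b m *\<^sub>R w (Suc (2*m))) = (\<Sum>m<Suc d. a m *\<^sub>R u (2*m))"
      unfolding scaleR_sum_right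
    proof (rule sum.cong[OF refl])
      fix m
      show "(1/2::real) *\<^sub>R b m *\<^sub>R w (Suc (2*m)) = a m *\<^sub>R u (2*m)"
        unfolding wS cc_even a_def b_def ca_id1[OF mu, of m] by simp
    qed
    then show ?thesis unfolding DS1 by simp
  qed
  have B2: "(\<Sum>m<Suc d. a m *\<^sub>R w (2*m)) = (1/2::real) *\<^sub>R D' S2 \<alpha>"
  proof -
    have "(\<Sum>m<Suc d. a m *\<^sub>R w (2*m)) = (\<Sum>m<d. a (Suc m) *\<^sub>R w (2 * Suc m))"
      by (simp add: sum.lessThan_Suc_shift w0' del: sum.lessThan_Suc)
    also have "\<dots> = (\<Sum>m<d. (1/2::real) *\<^sub>R (b m *\<^sub>R u (Suc (2*m))))"
    proof (rule sum.cong[OF refl])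
      fix m
      have e2: "2 * Suc m = Suc (Suc (2*m))" by simp
      show "a (Suc m) *\<^sub>R w (2 * Suc m) = (1/2::real) *\<^sub>R (b m *\<^sub>R u (Suc (2*m)))"
        unfolding e2 wS cc_odd scaleR_scaleR a_def b_def ca_id2[OF mu, of m] by simp
    qed
    also have "\<dots> = (1/2::real) *\<^sub>R D' S2 \<alpha>"
      unfolding DS2 by (simp add: ulast scaleR_sum_right)
    finally show ?thesis .
  qed
  have "DiracA e mu {1..j} (CK e mu j f) \<alpha> = D' (CK e mu j f) \<alpha> + e j (dunkl mu j (CK e mu j f) \<alpha>)"
    unfolding D'_def by (rule dirac_split[OF j(1)])
  also have "\<dots> = G *\<^sub>R (D' S1 \<alpha> - (1/2) *\<^sub>R e j (D' S2 \<alpha>)) +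
       G *\<^sub>R (e j (\<Sum>m<Suc d. a m *\<^sub>R w (2*m)) - (1/2) *\<^sub>R (\<Sum>m<Suc d. b m *\<^sub>R w (Suc (2*m))))"
    unfolding DCK TCK TS1 TS2 using j(1) by (simp add: e_scale e_add e_sq e_neg del: sum.lessThan_Suc)
  also have "\<dots> = 0"
    unfolding B2 using B1 j(1) by (simp add: e_scale algebra_simps del: sum.lessThan_Suc)
  finally show "DiracA e mu {1..j} (CK e mu j f) \<alpha> = 0" .
qed

end

context CL begin

lemma eigen:
  assumes l: "l \<le> n" and h: "hsup l d p" and D: "DiracA e mu {1..l} p = (\<lambda>\<alpha>. 0)"
  shows "GammaOp e mu {1..l} p = (\<lambda>\<alpha>. ((-1) ^ d * (real d + gammaA mu {1..l} - 1/2)) *\<^sub>R p \<alpha>)"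
proof -
  define A where "A = {1..l}"
  have A: "A \<subseteq> {1..n}" using l by (auto simp: A_def)
  have R: "reflA A p = (\<lambda>\<alpha>. ((-1) ^ d) *\<^sub>R p \<alpha>)"
  proof (rule ext)
    fix \<alpha>
    show "reflA A p \<alpha> = ((-1) ^ d) *\<^sub>R p \<alpha>"
    proof (cases "p \<alpha> = 0")
      case True then show ?thesis by (simp add: reflA_eq)
    next
      case False
      then have "(\<Sum>i\<in>A. Poly_Mapping.lookup \<alpha> i) = d" using h unfolding hsup_def A_def by blast
      then have "sgnA A \<alpha> = (-1) ^ d" unfolding sgnA_def by (simp flip: power_sum)
      then show ?thesis by (simp add: reflA_eq)
    qed
  qed
  have S: "SA e mu A p = (\<lambda>\<alpha>. (real d + gammaA mu A - 1/2) *\<^sub>R p \<alpha>)"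
  proof (rule ext)
    fix \<alpha>
    have X0: "xvecA e A (\<lambda>\<alpha>. 0) = (\<lambda>\<alpha>. 0)" by (rule lin_zero[OF lin_xvec[OF A]])
    show "SA e mu A p \<alpha> = (real d + gammaA mu A - 1/2) *\<^sub>R p \<alpha>"
    proof (cases "p \<alpha> = 0")
      case True then show ?thesis unfolding SA_M[OF A] D[folded A_def] X0 Mop_def Eul_def by simp
    next
      case False
      then have "(\<Sum>i\<in>A. Poly_Mapping.lookup \<alpha> i) = d" using h unfolding hsup_def A_def by blast
      then show ?thesis unfolding SA_M[OF A] D[folded A_def] X0 Mop_def Eul_def
        by (simp add: scaleR_add_left algebra_simps)
    qed
  qed
  show ?thesis
    unfolding A_def[symmetric] GammaOp_def R lin_scale[OF lin_SA[OF A]] S by (simp add: algebra_simps)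
qed

end

definition dg :: "(nat \<Rightarrow> nat) \<Rightarrow> nat \<Rightarrow> nat" where
  "dg js m = (if m = 0 then js 1 else (\<Sum>i\<in>{1..m}. js i))"

context CL begin

abbreviation inp where
  "inp js v m \<equiv> (if m = 0 then id else (xvecA e {1..m+1} ^^ js (m+1))) (CKbuild e mu js v m)"

lemma B0_sup: "hsup 1 (js 1) (CKbuild e mu js v 0)"
  unfolding hsup_def by (auto simp: lookup_single when_def)

lemma B_sup_inp:
  "Suc m \<le> n \<Longrightarrow> hsup (Suc m) (dg js m) (CKbuild e mu js v m) \<and> hsup (Suc m) (dg js (Suc m)) (inp js v m)"
proof (induction m)
  case 0
  then show ?case using B0_sup by (simp add: dg_def)
next
  case (Suc m)
  then have IH: "hsup (Suc m) (dg js (Suc m)) (inp js v m)" by simp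
  have j: "Suc (Suc m) \<in> {1..n}" "2 \<le> Suc (Suc m)" using Suc.prems by auto
  have B: "hsup (Suc (Suc m)) (dg js (Suc m)) (CKbuild e mu js v (Suc m))"
    using CK_sup[OF j, of "dg js (Suc m)" "inp js v m"] IH by (simp add: numeral_2_eq_2)
  have I: "hsup (Suc (Suc m)) (dg js (Suc (Suc m))) (inp js v (Suc m))"
  proof -
    have "hsup (Suc (Suc m)) (dg js (Suc m) + js (Suc (Suc m))) ((xvecA e {1..Suc (Suc m)} ^^ js (Suc (Suc m))) (CKbuild e mu js v (Suc m)))"
      by (rule hsup_xpow) (use Suc.prems B in auto)
    moreover have "dg js (Suc (Suc m)) = dg js (Suc m) + js (Suc (Suc m))"
      by (simp add: dg_def)
    ultimately show ?thesis by simp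
  qed
  show ?case using B I by simp
qed

lemma B_mono:
  assumes m: "1 \<le> m" "Suc m \<le> n" and mu: "\<forall>i\<in>{1..n}. mu i > 0"
  shows "DiracA e mu {1..Suc m} (CKbuild e mu js v m) = (\<lambda>\<alpha>. 0)"
proof -
  obtain k where k: "m = Suc k" using m(1) by (cases m) auto
  have j: "Suc (Suc k) \<in> {1..n}" "2 \<le> Suc (Suc k)" using m k by auto
  have I: "hsup (Suc (Suc k) - 1) (dg js (Suc k)) (inp js v k)"
    using B_sup_inp[of k js v] m k by simp
  have "DiracA e mu {1..Suc (Suc k)} (CK e mu (Suc (Suc k)) (inp js v k)) = (\<lambda>\<alpha>. 0)"
    by (rule CK_mono[OF j I]) (use mu j in auto)
  then show ?thesis using k by (simp add: numeral_2_eq_2)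
qed

lemma lin_scaleop: "lin_op (\<lambda>p. (\<lambda>\<alpha>. c *\<^sub>R p \<alpha>))"
  by (simp add: lin_op_def fun_eq_iff algebra_simps)

lemma Gamma_step:
  assumes l: "2 \<le> l" "l \<le> Suc m" and m: "Suc (Suc m) \<le> n" "1 \<le> m"
    and IH: "GammaOp e mu {1..l} (CKbuild e mu js v m) = (\<lambda>\<alpha>. c *\<^sub>R CKbuild e mu js v m \<alpha>)"
  shows "GammaOp e mu {1..l} (CKbuild e mu js v (Suc m)) = (\<lambda>\<alpha>. c *\<^sub>R CKbuild e mu js v (Suc m) \<alpha>)"
proof -
  define j where "j = Suc (Suc m)"
  define A where "A = {1..l}"
  define X where "X = xvecA e {1..Suc m}"
  define g where "g = (X ^^ js (Suc m)) (CKbuild e mu js v m)"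
  have A: "A \<subseteq> {1..n}" using l m by (auto simp: A_def)
  have jn: "j \<in> {1..n}" "2 \<le> j" "j \<notin> A" using l m by (auto simp: j_def A_def)
  have B: "CKbuild e mu js v (Suc m) = CK e mu j g"
    using m by (simp add: j_def g_def X_def numeral_2_eq_2)
  have hg: "hsup (j - 1) (dg js (Suc m)) g"
    using B_sup_inp[of m js v] m by (simp add: j_def g_def X_def)
  note fin = z_fin[OF jn(1,2) hg]
  have lX: "lin_op X" unfolding X_def using m by (intro lin_xvec) auto
  have GX: "GammaOp e mu A (X p) = X (GammaOp e mu A p)" for p
    unfolding X_def by (rule Gamma_xvec_super) (use l m A_def in auto)
  have Gz: "GammaOp e mu A (zop e mu j p) = zop e mu j (GammaOp e mu A p)" for p
  proof -
    have "GammaOp e mu A (DiracA e mu {1..<j} p) = DiracA e mu {1..<j} (GammaOp e mu A p)"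
      by (rule Gamma_dirac_super) (use l m in \<open>auto simp: A_def j_def\<close>)
    then show ?thesis unfolding zop_def using Gamma_mulx[OF A jn(3)] by simp
  qed
  have GE: "GammaOp e mu A (Eop e j p) = Eop e j (GammaOp e mu A p)" for p
    by (rule Gamma_Eop[OF A jn(1) jn(3)])
  have lz: "lin_op (zop e mu j)" using jn by (intro lin_zop) auto
  have Gg: "GammaOp e mu A g = (\<lambda>\<alpha>. c *\<^sub>R g \<alpha>)"
    unfolding g_def F_pow[of "GammaOp e mu A" X, OF GX] IH[folded A_def] lin_scale[OF lin_pow[OF lX]] ..
  have "GammaOp e mu A (CK e mu j g) = CK e mu j (GammaOp e mu A g)"
    by (rule CK_comm[OF lin_Gamma[OF A] Gz GE fin])
  also have "\<dots> = CK e mu j (\<lambda>\<alpha>. c *\<^sub>R g \<alpha>)" by (simp add: Gg)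
  also have "\<dots> = (\<lambda>\<alpha>. c *\<^sub>R CK e mu j g \<alpha>)"
    by (rule CK_comm[OF lin_scaleop _ _ fin, symmetric])
       (simp_all add: lin_scale[OF lz] lin_scale[OF lin_Eop[OF jn(1)]])
  finally show ?thesis unfolding B A_def .
qed

end

theorem proposition8:
  fixes n k l :: nat and mu :: "nat \<Rightarrow> real"
    and e :: "nat \<Rightarrow> 'v::real_normed_vector \<Rightarrow> 'v"
    and vs :: "'s::finite \<Rightarrow> 'v" and s :: 's
    and js :: "nat \<Rightarrow> nat"
  assumes "n \<ge> 3"
    and "\<forall>i\<in>{1..n}. mu i > 0"
    and "\<forall>i\<in>{1..n}. linear (e i)"
    and "\<forall>i\<in>{1..n}. \<forall>j\<in>{1..n}. \<forall>w. e i (e j w) + e j (e i w) = (if i = j then (-2) *\<^sub>R w else 0)"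
    and "inj vs" and "independent (range vs)" and "span (range vs) = UNIV"
    and "(\<Sum>i=1..n-2. js i) \<le> k"
    and "js (n - 1) = k - (\<Sum>i=1..n-2. js i)"
    and "l \<in> {2..n}"
  shows "GammaOp e mu {1..l} (Psi e mu n js (vs s)) =
         (\<lambda>\<alpha>. ((-1) ^ (\<Sum>i=1..l-1. js i) * (real (\<Sum>i=1..l-1. js i) + gammaA mu {1..l} - 1/2))
                *\<^sub>R Psi e mu n js (vs s) \<alpha>)"
proof -
  interpret CL e mu n by (rule CL.intro) (use assms(3,4) in blast)+
  define B where "B m = CKbuild e mu js (vs s) m" for m
  define sm where "sm = (\<Sum>i=1..l-1. js i)"
  define c where "c = (-1) ^ sm * (real sm + gammaA mu {1..l} - 1/2)"
  have l: "2 \<le> l" "l \<le> n" using assms(10) by auto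
  have base: "GammaOp e mu {1..l} (B (l - 1)) = (\<lambda>\<alpha>. c *\<^sub>R B (l - 1) \<alpha>)"
  proof -
    have Sl: "Suc (l - 1) = l" using l by simp
    have h: "hsup l (dg js (l - 1)) (B (l - 1))"
      using B_sup_inp[of "l - 1" js "vs s"] l unfolding B_def Sl by simp
    have dgl: "dg js (l - 1) = sm" using l by (simp add: dg_def sm_def)
    have D: "DiracA e mu {1..l} (B (l - 1)) = (\<lambda>\<alpha>. 0)"
      using B_mono[of "l - 1" js "vs s"] l assms(2) unfolding B_def Sl by simp
    show ?thesis using eigen[OF l(2) h D] unfolding dgl c_def by simp
  qed
  have step: "l - 1 + k' \<le> n - 1 \<Longrightarrow> GammaOp e mu {1..l} (B (l - 1 + k')) = (\<lambda>\<alpha>. c *\<^sub>R B (l - 1 + k') \<alpha>)" for k'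
  proof (induction k')
    case 0 then show ?case using base by simp
  next
    case (Suc k')
    have IH: "GammaOp e mu {1..l} (B (l - 1 + k')) = (\<lambda>\<alpha>. c *\<^sub>R B (l - 1 + k') \<alpha>)"
      using Suc by simp
    have "GammaOp e mu {1..l} (B (Suc (l - 1 + k'))) = (\<lambda>\<alpha>. c *\<^sub>R B (Suc (l - 1 + k')) \<alpha>)"
      unfolding B_def by (rule Gamma_step[OF l(1) _ _ _ IH[unfolded B_def]]) (use l Suc.prems in auto)
    then show ?case by simp
  qed
  have "l - 1 + (n - l) = n - 1" using l by simp
  then have "GammaOp e mu {1..l} (B (n - 1)) = (\<lambda>\<alpha>. c *\<^sub>R B (n - 1) \<alpha>)"
    using step[of "n - l"] by simp
  then show ?thesis unfolding B_def Psi_def c_def sm_def .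
qed

end
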